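(* Let $(\Omega,d)$ be a noncomplete $L$-quasiconvex metric space which is open in its completion, and let $\mu$ be a Borel measure on $\Omega$ which is globally doubling on $(\Omega,d)$ with doubling constant $C_\mu$. Let $\alpha>0$. Then $\mu^\alpha$ is doubling on $(\Omega,k)$ for $k$-balls of radii at most $\tfrac18$, with doubling constant $4^\alpha C_\mu^m$ where $m=\lceil\log_2 8L\rceil$. Moreover, for every $R_1>0$, $\mu^\alpha$ is doubling on $(\Omega,k)$ for $k$-balls of radii at most $R_1$.
   Context: A metric space is $L$-quasiconvex if any two points $x,y$ can be joined by a curve of length at most $L\,d(x,y)$. Let $\partial\Omega$ be the boundary of $\Omega$ in its completion and $d_\Omega(x)=\operatorname{dist}(x,\partial\Omega)$. The quasihyperbolic metric is $k(x,y)=\inf_\gamma\int_\gamma\frac{ds}{d_\Omega(\gamma(s))}$, the infimum over rectifiable curves in $\Omega$ joining $x$ to $y$; $k$-balls are balls with respect to $k$. For $\alpha>0$, $\mu^\alpha(E)=\int_E d_\Omega(x)^{-\alpha}\,d\mu(x)$. A measure $\nu$ is doubling for balls of radii at most $R$ with constant $C$ if $0<\nu(B(x,2r))\le C\nu(B(x,r))<\infty$ for all $x$ and $0<r\le R$; globally doubling if this holds for all $r>0$. *)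

theory Defs
  imports "HOL-Analysis.Analysis"
begin

text \<open>Setting: the metric space Omega is represented as a subset of a complete metric
space (type class complete_space); its completion is then (isometric to) closure Omega.\<close>

definition bdry_compl :: "'a::metric_space set \<Rightarrow> 'a set" where
  "bdry_compl \<Omega> = closure \<Omega> - \<Omega>"

definition dist_bdry :: "'a::metric_space set \<Rightarrow> 'a \<Rightarrow> real" where
  "dist_bdry \<Omega> x = infdist x (bdry_compl \<Omega>)"

definition curve_length :: "(real \<Rightarrow> 'a::metric_space) \<Rightarrow> real \<Rightarrow> real \<Rightarrow> ennreal" where
  "curve_length g a b =
     (SUP p \<in> {(t, n). t 0 = a \<and> t n = b \<and> (\<forall>i<n. t i \<le> t (Suc i))}.
        ennreal (\<Sum>i<snd p. dist (g (fst p i)) (g (fst p (Suc i)))))"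

definition curve_in :: "'a::metric_space set \<Rightarrow> (real \<Rightarrow> 'a) \<Rightarrow> bool" where
  "curve_in \<Omega> g \<longleftrightarrow> path g \<and> path_image g \<subseteq> \<Omega>"

definition rectifiable :: "(real \<Rightarrow> 'a::metric_space) \<Rightarrow> bool" where
  "rectifiable g \<longleftrightarrow> path g \<and> curve_length g 0 1 < \<infinity>"

definition quasiconvex :: "real \<Rightarrow> 'a::metric_space set \<Rightarrow> bool" where
  "quasiconvex L \<Omega> \<longleftrightarrow>
     (\<forall>x\<in>\<Omega>. \<forall>y\<in>\<Omega>. \<exists>g. curve_in \<Omega> g \<and> pathstart g = x \<and> pathfinish g = y \<and>
        curve_length g 0 1 \<le> ennreal (L * dist x y))"

definition arclength_fun :: "(real \<Rightarrow> 'a::metric_space) \<Rightarrow> real \<Rightarrow> real" where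
  "arclength_fun g t = enn2real (curve_length g 0 (min t 1))"

definition line_integral :: "('a::metric_space \<Rightarrow> ennreal) \<Rightarrow> (real \<Rightarrow> 'a) \<Rightarrow> ennreal" where
  "line_integral f g = set_nn_integral (interval_measure (arclength_fun g)) {0..1} (\<lambda>t. f (g t))"

definition qh_dist :: "'a::metric_space set \<Rightarrow> 'a \<Rightarrow> 'a \<Rightarrow> ennreal" where
  "qh_dist \<Omega> x y =
     (INF g \<in> {g. curve_in \<Omega> g \<and> rectifiable g \<and> pathstart g = x \<and> pathfinish g = y}.
        line_integral (\<lambda>z. ennreal (1 / dist_bdry \<Omega> z)) g)"

definition qh_ball :: "'a::metric_space set \<Rightarrow> 'a \<Rightarrow> real \<Rightarrow> 'a set" where
  "qh_ball \<Omega> x r = {y \<in> \<Omega>. qh_dist \<Omega> x y < ennreal r}"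

definition doubling_upto ::
  "'a measure \<Rightarrow> 'a set \<Rightarrow> ('a \<Rightarrow> real \<Rightarrow> 'a set) \<Rightarrow> real \<Rightarrow> real \<Rightarrow> bool" where
  "doubling_upto \<nu> \<Omega> B R C \<longleftrightarrow>
     (\<forall>x\<in>\<Omega>. \<forall>r. 0 < r \<and> r \<le> R \<longrightarrow>
        0 < emeasure \<nu> (B x (2 * r)) \<and>
        emeasure \<nu> (B x (2 * r)) \<le> ennreal C * emeasure \<nu> (B x r) \<and>
        emeasure \<nu> (B x r) < \<infinity>)"

definition doubling_global ::
  "'a measure \<Rightarrow> 'a set \<Rightarrow> ('a \<Rightarrow> real \<Rightarrow> 'a set) \<Rightarrow> real \<Rightarrow> bool" where
  "doubling_global \<nu> \<Omega> B C \<longleftrightarrow>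
     (\<forall>x\<in>\<Omega>. \<forall>r. 0 < r \<longrightarrow>
        0 < emeasure \<nu> (B x (2 * r)) \<and>
        emeasure \<nu> (B x (2 * r)) \<le> ennreal C * emeasure \<nu> (B x r) \<and>
        emeasure \<nu> (B x r) < \<infinity>)"

definition d_ball :: "'a::metric_space set \<Rightarrow> 'a \<Rightarrow> real \<Rightarrow> 'a set" where
  "d_ball \<Omega> x r = ball x r \<inter> \<Omega>"

definition weighted_measure :: "'a::metric_space set \<Rightarrow> 'a measure \<Rightarrow> real \<Rightarrow> 'a measure" where
  "weighted_measure \<Omega> \<mu> \<alpha> = density \<mu> (\<lambda>x. ennreal (dist_bdry \<Omega> x powr (- \<alpha>)))"

end

theory Submission
  imports Defs
begin



definition parts :: "real \<Rightarrow> real \<Rightarrow> ((nat \<Rightarrow> real) \<times> nat) set" where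
  "parts a b = {(t, n). t 0 = a \<and> t n = b \<and> (\<forall>i<n. t i \<le> t (Suc i))}"

definition psum :: "(real \<Rightarrow> 'a::metric_space) \<Rightarrow> (nat \<Rightarrow> real) \<times> nat \<Rightarrow> real" where
  "psum g p = (\<Sum>i<snd p. dist (g (fst p i)) (g (fst p (Suc i))))"

lemma curve_length_alt: "curve_length g a b = (SUP p\<in>parts a b. ennreal (psum g p))"
  by (simp add: curve_length_def parts_def psum_def)

lemma psum_nonneg: "0 \<le> psum g p"
  by (simp add: psum_def sum_nonneg)

lemma parts_mono:
  assumes "(t, n) \<in> parts a b" "i \<le> j" "j \<le> n"
  shows "t i \<le> t j"
  using assms(2,3)
proof (induction j)
  case 0 then show ?case by simp
next
  case (Suc j)
  show ?case
  proof (cases "i = Suc j")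
    case True then show ?thesis by simp
  next
    case False
    then have "t i \<le> t j" using Suc by auto
    also have "t j \<le> t (Suc j)" using assms(1) Suc.prems by (auto simp: parts_def)
    finally show ?thesis .
  qed
qed

lemma parts_range:
  assumes "(t, n) \<in> parts a b" "i \<le> n"
  shows "a \<le> t i" "t i \<le> b"
  using parts_mono[OF assms(1), of 0 i] parts_mono[OF assms(1), of i n] assms
  by (auto simp: parts_def)

lemma parts_le: "(t, n) \<in> parts a b \<Longrightarrow> a \<le> b"
  using parts_range[of t n a b 0] by auto

lemma psum_le_length: "p \<in> parts a b \<Longrightarrow> ennreal (psum g p) \<le> curve_length g a b"
  unfolding curve_length_alt by (rule SUP_upper)

lemma parts_nonempty: "a \<le> b \<Longrightarrow> (\<lambda>i. if i = 0 then a else b, 1) \<in> parts a b"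
  by (auto simp: parts_def)

lemma length_ge_dist:
  assumes "a \<le> b"
  shows "ennreal (dist (g a) (g b)) \<le> curve_length g a b"
proof -
  have "ennreal (psum g (\<lambda>i. if i = 0 then a else b, 1)) \<le> curve_length g a b"
    by (rule psum_le_length[OF parts_nonempty[OF assms]])
  then show ?thesis by (simp add: psum_def)
qed

lemma length_refl: "curve_length g a a = 0"
proof -
  have "psum g p = 0" if "p \<in> parts a a" for p
  proof -
    obtain t n where p: "p = (t, n)" by force
    have "t i = a" if "i \<le> n" for i using parts_range[of t n a a i] that \<open>p \<in> parts a a\<close> p by auto
    then show ?thesis by (simp add: psum_def p)
  qed
  then have "(SUP p\<in>parts a a. ennreal (psum g p)) = (SUP p\<in>parts a a. 0)"
    by (intro SUP_cong) auto
  moreover have "parts a a \<noteq> {}" using parts_nonempty[of a a] by blast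
  ultimately show ?thesis unfolding curve_length_alt by simp
qed

lemma length_empty:
  assumes "b < a" shows "curve_length g a b = 0"
proof -
  have "parts a b = {}" using parts_le assms by force
  then show ?thesis unfolding curve_length_alt by (simp add: bot_ennreal)
qed

lemma dist_split:
  fixes g :: "real \<Rightarrow> 'a::metric_space"
  assumes "p \<le> q"
  shows "dist (g p) (g q) \<le> dist (g (min p b)) (g (min q b)) + dist (g (max p b)) (g (max q b))"
proof (cases "q \<le> b")
  case True then show ?thesis using assms by (simp add: min_def max_def)
next
  case False
  show ?thesis
  proof (cases "b \<le> p")
    case True then show ?thesis using assms by (simp add: min_def max_def)
  next
    case False
    then have "min p b = p" "min q b = b" "max p b = b" "max q b = q" using \<open>\<not> q \<le> b\<close> by auto
    then show ?thesis by (simp add: dist_triangle)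
  qed
qed

lemma parts_min: "(t, n) \<in> parts a c \<Longrightarrow> a \<le> b \<Longrightarrow> b \<le> c \<Longrightarrow> (\<lambda>i. min (t i) b, n) \<in> parts a b"
  by (auto simp: parts_def min_def)

lemma parts_max: "(t, n) \<in> parts a c \<Longrightarrow> a \<le> b \<Longrightarrow> b \<le> c \<Longrightarrow> (\<lambda>i. max (t i) b, n) \<in> parts b c"
  by (auto simp: parts_def max_def)

lemma psum_split:
  assumes "(t, n) \<in> parts a c"
  shows "psum g (t, n) \<le> psum g (\<lambda>i. min (t i) b, n) + psum g (\<lambda>i. max (t i) b, n)"
  unfolding psum_def snd_conv fst_conv sum.distrib[symmetric]
  by (rule sum_mono, rule dist_split) (use assms in \<open>auto simp: parts_def\<close>)

lemma length_subadd:
  assumes "a \<le> b" "b \<le> c"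
  shows "curve_length g a c \<le> curve_length g a b + curve_length g b c"
  unfolding curve_length_alt[of g a c]
proof (rule SUP_least)
  fix p assume p: "p \<in> parts a c"
  obtain t n where pt: "p = (t, n)" by force
  have "ennreal (psum g p) \<le> ennreal (psum g (\<lambda>i. min (t i) b, n) + psum g (\<lambda>i. max (t i) b, n))"
    using psum_split[of t n a c g b] p pt by (auto intro: ennreal_leI)
  also have "\<dots> = ennreal (psum g (\<lambda>i. min (t i) b, n)) + ennreal (psum g (\<lambda>i. max (t i) b, n))"
    by (simp add: ennreal_plus psum_nonneg)
  also have "\<dots> \<le> curve_length g a b + curve_length g b c"
    by (intro add_mono psum_le_length parts_min parts_max) (use p pt assms in auto)
  finally show "ennreal (psum g p) \<le> curve_length g a b + curve_length g b c" .
qed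

definition pconcat :: "(nat \<Rightarrow> real) \<times> nat \<Rightarrow> (nat \<Rightarrow> real) \<times> nat \<Rightarrow> (nat \<Rightarrow> real) \<times> nat" where
  "pconcat p q = (\<lambda>i. if i \<le> snd p then fst p i else fst q (i - snd p), snd p + snd q)"

lemma pconcat_parts:
  assumes "p \<in> parts a b" "q \<in> parts b c"
  shows "pconcat p q \<in> parts a c"
proof -
  obtain t n where p: "p = (t, n)" by force
  obtain s m where q: "q = (s, m)" by force
  have "(if i \<le> n then t i else s (i - n)) \<le> (if Suc i \<le> n then t (Suc i) else s (Suc i - n))"
    if "i < n + m" for i
  proof (cases "Suc i \<le> n")
    case True then show ?thesis using assms p by (auto simp: parts_def)
  next
    case False
    show ?thesis
    proof (cases "i = n")
      case True
      then have "s 0 \<le> s (Suc 0)" using assms q that by (auto simp: parts_def)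
      then show ?thesis using True assms p q by (auto simp: parts_def)
    next
      case False
      then have "i - n < m" "Suc i - n = Suc (i - n)" using \<open>\<not> Suc i \<le> n\<close> that by auto
      then show ?thesis using \<open>\<not> Suc i \<le> n\<close> False assms q by (auto simp: parts_def)
    qed
  qed
  then show ?thesis
    unfolding parts_def mem_Collect_eq pconcat_def p q fst_conv snd_conv case_prod_conv
  proof (intro conjI allI impI)
    show "(if n + m \<le> n then t (n + m) else s (n + m - n)) = c"
      using assms p q by (cases "m = 0") (auto simp: parts_def)
  qed (use assms p q in \<open>auto simp: parts_def\<close>)
qed

lemma pconcat_psum:
  assumes "p \<in> parts a b" "q \<in> parts b c"
  shows "psum g (pconcat p q) = psum g p + psum g q"
proof -
  obtain t n where p: "p = (t, n)" by force
  obtain s m where q: "q = (s, m)" by force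
  let ?r = "\<lambda>i. if i \<le> n then t i else s (i - n)"
  have "(\<Sum>i<n + k. dist (g (?r i)) (g (?r (Suc i)))) =
        (\<Sum>i<n. dist (g (t i)) (g (t (Suc i)))) + (\<Sum>i<k. dist (g (s i)) (g (s (Suc i))))" for k
  proof (induction k)
    case 0 then show ?case by simp
  next
    case (Suc k)
    have "?r (n + k) = s k" using assms p q by (auto simp: parts_def)
    moreover have "?r (Suc (n + k)) = s (Suc k)" by (simp add: Suc_diff_le)
    ultimately show ?case using Suc by simp
  qed
  note eq = this
  show ?thesis unfolding psum_def pconcat_def p q fst_conv snd_conv by (rule eq[of m])
qed

lemma length_superadd:
  assumes "a \<le> b" "b \<le> c"
  shows "curve_length g a b + curve_length g b c \<le> curve_length g a c"
proof -
  have ne1: "parts a b \<noteq> {}" "parts b c \<noteq> {}" using parts_nonempty assms by blast+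
  have "curve_length g a b + curve_length g b c =
    (SUP p\<in>parts a b. SUP q\<in>parts b c. ennreal (psum g p) + ennreal (psum g q))"
    unfolding curve_length_alt
    by (simp add: ennreal_SUP_add_left[symmetric] ennreal_SUP_add_right[symmetric] ne1)
  also have "\<dots> \<le> curve_length g a c"
  proof (intro SUP_least)
    fix p q assume "p \<in> parts a b" "q \<in> parts b c"
    then show "ennreal (psum g p) + ennreal (psum g q) \<le> curve_length g a c"
      using psum_le_length[OF pconcat_parts, of p a b q c g] pconcat_psum[of p a b q c g]
      by (simp add: ennreal_plus psum_nonneg)
  qed
  finally show ?thesis .
qed

lemma length_add:
  assumes "a \<le> b" "b \<le> c"
  shows "curve_length g a c = curve_length g a b + curve_length g b c"
  using length_subadd[OF assms] length_superadd[OF assms] by (rule antisym)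

lemma length_mono:
  assumes "a \<le> b" "b \<le> c"
  shows "curve_length g a b \<le> curve_length g a c"
  using length_add[OF assms, of g] by simp

lemma length_mono2:
  assumes "a \<le> b" "b \<le> c"
  shows "curve_length g b c \<le> curve_length g a c"
  using length_add[OF assms, of g] by simp

lemma length_cong:
  assumes "\<And>t. t \<in> {a..b} \<Longrightarrow> g t = h t"
  shows "curve_length g a b = curve_length h a b"
proof -
  have "psum g p = psum h p" if "p \<in> parts a b" for p
  proof -
    obtain t n where p: "p = (t, n)" by force
    have "g (t i) = h (t i)" if "i \<le> n" for i
      using assms parts_range[of t n a b i] that \<open>p \<in> parts a b\<close> p by auto
    then show ?thesis by (simp add: psum_def p)
  qed
  then show ?thesis unfolding curve_length_alt by simp
qed

lemma length_affine:
  assumes "c > 0"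
  shows "curve_length (\<lambda>t. g (c * t + e)) a b = curve_length g (c * a + e) (c * b + e)"
proof -
  let ?phi = "\<lambda>p::(nat \<Rightarrow> real) \<times> nat. (\<lambda>i. c * fst p i + e, snd p)"
  have img: "?phi ` parts a b = parts (c * a + e) (c * b + e)"
  proof (intro equalityI subsetI)
    fix p assume "p \<in> ?phi ` parts a b"
    then show "p \<in> parts (c * a + e) (c * b + e)" using assms by (auto simp: parts_def)
  next
    fix p assume p: "p \<in> parts (c * a + e) (c * b + e)"
    obtain t n where pt: "p = (t, n)" by force
    have "(\<lambda>i. (t i - e) / c, n) \<in> parts a b"
      using p pt assms by (auto simp: parts_def divide_right_mono)
    moreover have "p = ?phi (\<lambda>i. (t i - e) / c, n)" using pt assms by auto
    ultimately show "p \<in> ?phi ` parts a b" by blast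
  qed
  have "curve_length g (c * a + e) (c * b + e) = (SUP p\<in>?phi ` parts a b. ennreal (psum g p))"
    unfolding curve_length_alt img ..
  also have "\<dots> = (SUP p\<in>parts a b. ennreal (psum g (?phi p)))"
    by (simp add: image_comp)
  also have "\<dots> = curve_length (\<lambda>t. g (c * t + e)) a b"
    unfolding curve_length_alt by (simp add: psum_def)
  finally show ?thesis ..
qed





definition lr :: "(real \<Rightarrow> 'a::metric_space) \<Rightarrow> real \<Rightarrow> real \<Rightarrow> real" where
  "lr g a b = enn2real (curve_length g a b)"

lemma rect_finite:
  assumes "rectifiable g" "0 \<le> a" "a \<le> b" "b \<le> 1"
  shows "curve_length g a b < \<infinity>"
proof -
  have "curve_length g a b \<le> curve_length g 0 b" using length_mono2[of 0 a b g] assms by simp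
  also have "\<dots> \<le> curve_length g 0 1" using length_mono[of 0 b 1 g] assms by simp
  finally show ?thesis using assms(1) by (auto simp: rectifiable_def)
qed

lemma rect_ennreal:
  assumes "rectifiable g" "0 \<le> a" "a \<le> b" "b \<le> 1"
  shows "curve_length g a b = ennreal (lr g a b)"
  using rect_finite[OF assms] by (simp add: lr_def ennreal_enn2real_if less_top)

lemma lr_nonneg: "0 \<le> lr g a b"
  by (simp add: lr_def)

lemma lr_add:
  assumes "rectifiable g" "0 \<le> a" "a \<le> b" "b \<le> c" "c \<le> 1"
  shows "lr g a c = lr g a b + lr g b c"
proof -
  have "curve_length g a c = curve_length g a b + curve_length g b c"
    using length_add[of a b c g] assms by simp
  moreover have "curve_length g a c = ennreal (lr g a c)" by (rule rect_ennreal) (use assms in auto)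
  moreover have "curve_length g a b = ennreal (lr g a b)" by (rule rect_ennreal) (use assms in auto)
  moreover have "curve_length g b c = ennreal (lr g b c)" by (rule rect_ennreal) (use assms in auto)
  ultimately have "ennreal (lr g a c) = ennreal (lr g a b) + ennreal (lr g b c)" by simp
  also have "\<dots> = ennreal (lr g a b + lr g b c)" by (rule ennreal_plus[symmetric]) (auto simp: lr_nonneg)
  finally show ?thesis by (subst (asm) ennreal_inj) (auto simp: lr_nonneg add_nonneg_nonneg)
qed

lemma lr_ge_dist:
  assumes "rectifiable g" "0 \<le> a" "a \<le> b" "b \<le> 1"
  shows "dist (g a) (g b) \<le> lr g a b"
proof -
  have "ennreal (dist (g a) (g b)) \<le> ennreal (lr g a b)"
    using length_ge_dist[OF assms(3), of g] rect_ennreal[OF assms] by simp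
  then show ?thesis using lr_nonneg[of g a b] by (simp add: ennreal_le_iff)
qed

lemma lr_refl: "lr g a a = 0"
  by (simp add: lr_def length_refl)

lemma psum_le_lr:
  assumes "rectifiable g" "0 \<le> a" "a \<le> b" "b \<le> 1" "p \<in> parts a b"
  shows "psum g p \<le> lr g a b"
proof -
  have "ennreal (psum g p) \<le> ennreal (lr g a b)"
    using psum_le_length[OF assms(5), of g] rect_ennreal[OF assms(1-4)] by simp
  then show ?thesis using lr_nonneg[of g a b] by (simp add: ennreal_le_iff)
qed

lemma lr_unif:
  assumes "rectifiable g" "e > 0"
  shows "\<exists>d>0. \<forall>s t. 0 \<le> s \<longrightarrow> s \<le> t \<longrightarrow> t \<le> 1 \<longrightarrow> t - s < d \<longrightarrow> lr g s t < e"
proof -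
  have pg: "path g" using assms by (simp add: rectifiable_def)
  define l where "l = lr g 0 1"
  obtain p where p: "p \<in> parts 0 1" "l - e/2 < psum g p"
  proof (cases "l - e/2 < 0")
    case True
    have "0 \<le> psum g (\<lambda>i. if i = 0 then 0 else 1, 1)" by (rule psum_nonneg)
    then have "l - e/2 < psum g (\<lambda>i. if i = 0 then 0 else 1, 1)" using True by linarith
    then show ?thesis by (intro that[OF parts_nonempty]) auto
  next
    case False
    then have "ennreal (l - e/2) < curve_length g 0 1"
      using rect_ennreal[OF assms(1), of 0 1] l_def assms(2) by (simp add: ennreal_lessI)
    then obtain p where p: "p \<in> parts 0 1" "ennreal (l - e/2) < ennreal (psum g p)"
      unfolding curve_length_alt by (auto simp: less_SUP_iff)
    then have "l - e/2 < psum g p" using False by (simp add: ennreal_less_iff)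
    then show ?thesis using that p by blast
  qed
  obtain P n where pP: "p = (P, n)" by force
  have pl: "l - e/2 < psum g p" using p(2) .
  have "n \<noteq> 0"
  proof
    assume "n = 0" then show False using p pP by (auto simp: parts_def)
  qed
  then have npos: "real n > 0" by simp
  have uc: "uniformly_continuous_on {0..1} g"
    using pg by (intro compact_uniformly_continuous) (auto simp: path_def)
  have e2: "e / (2 * n) > 0" using assms(2) npos by simp
  obtain d where d0: "d > 0" and d1: "\<forall>x\<in>{0..1}. \<forall>x'\<in>{0..1}. dist x' x < d \<longrightarrow>
      dist (g x') (g x) < e / (2 * n)"
  proof -
    have "\<exists>d>0. \<forall>x\<in>{0..1}. \<forall>x'\<in>{0..1}. dist x' x < d \<longrightarrow> dist (g x') (g x) < e / (2 * n)"
      using uc e2 unfolding uniformly_continuous_on_def by simp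
    then show ?thesis using that by auto
  qed
  note d = d0 d1[rule_format]
  show ?thesis
  proof (intro exI[of _ d] conjI allI impI d(1))
    fix s t :: real assume st: "0 \<le> s" "s \<le> t" "t \<le> 1" "t - s < d"
    have Pp: "(P, n) \<in> parts 0 1" using p pP by simp
    define Q1 where "Q1 = (\<lambda>i. min (P i) s, n)"
    define R where "R = (\<lambda>i. max (P i) s, n)"
    define Q2 where "Q2 = (\<lambda>i. min (max (P i) s) t, n)"
    define Q3 where "Q3 = (\<lambda>i. max (max (P i) s) t, n)"
    have Q1p: "Q1 \<in> parts 0 s" unfolding Q1_def using parts_min[OF Pp, of s] st by auto
    have Rp: "(\<lambda>i. max (P i) s, n) \<in> parts s 1" using parts_max[OF Pp, of s] st by auto
    have Q2p: "Q2 \<in> parts s t" unfolding Q2_def using parts_min[OF Rp, of t] st by auto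
    have Q3p: "Q3 \<in> parts t 1" unfolding Q3_def using parts_max[OF Rp, of t] st by auto
    have near: "dist (g a) (g b) < e / (2 * n)" if "s \<le> a" "a \<le> t" "s \<le> b" "b \<le> t" for a b
    proof (rule d(2))
      show "a \<in> {0..1}" "b \<in> {0..1}" using that st by auto
      have "\<bar>a - b\<bar> < d" using that st by (simp add: abs_if)
      then show "dist a b < d" by (simp add: dist_real_def)
    qed
    have "psum g p \<le> psum g Q1 + psum g R"
      unfolding pP Q1_def R_def by (rule psum_split[OF Pp])
    moreover have "psum g R \<le> psum g Q2 + psum g Q3"
      unfolding R_def Q2_def Q3_def by (rule psum_split[OF Rp])
    moreover have "psum g Q1 \<le> lr g 0 s" using psum_le_lr[OF assms(1) _ st(1) _ Q1p] st by auto
    moreover have "psum g Q3 \<le> lr g t 1" using psum_le_lr[OF assms(1) _ _ _ Q3p] st by auto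
    moreover have "psum g Q2 < e / 2"
    proof -
      have "psum g Q2 = (\<Sum>i<n. dist (g (min (max (P i) s) t)) (g (min (max (P (Suc i)) s) t)))"
        by (simp add: psum_def Q2_def)
      also have "\<dots> < (\<Sum>i<n. e / (2 * n))"
      proof (rule sum_strict_mono)
        fix i assume "i \<in> {..<n}"
        then have "s \<le> min (max (P i) s) t" "min (max (P i) s) t \<le> t"
          "s \<le> min (max (P (Suc i)) s) t" "min (max (P (Suc i)) s) t \<le> t"
          using parts_range[of "fst Q2" n s t i] parts_range[of "fst Q2" n s t "Suc i"] Q2p
          by (auto simp: Q2_def)
        then show "dist (g (min (max (P i) s) t)) (g (min (max (P (Suc i)) s) t)) < e / (2 * n)"
          by (intro near)
      qed (use \<open>n \<noteq> 0\<close> in auto)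
      also have "\<dots> = e / 2" using npos by simp
      finally show ?thesis .
    qed
    moreover have "l = lr g 0 s + lr g s t + lr g t 1"
      using lr_add[OF assms(1), of 0 s 1] lr_add[OF assms(1), of s t 1] st l_def by auto
    ultimately show "lr g s t < e" using pl by linarith
  qed
qed

lemma arclength_clamp:
  "arclength_fun g t = lr g 0 (max 0 (min t 1))"
proof (cases "t < 0")
  case True
  then show ?thesis by (simp add: arclength_fun_def lr_def length_empty length_refl)
next
  case False
  then show ?thesis by (simp add: arclength_fun_def lr_def)
qed

lemma arclength_at:
  "0 \<le> t \<Longrightarrow> t \<le> 1 \<Longrightarrow> arclength_fun g t = lr g 0 t"
  by (simp add: arclength_clamp)

lemma lr_mono:
  assumes "rectifiable g" "0 \<le> a" "a \<le> b" "b \<le> 1"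
  shows "lr g 0 a \<le> lr g 0 b"
  using lr_add[OF assms(1), of 0 a b] assms lr_nonneg[of g a b] by auto

lemma arclength_mono:
  assumes "rectifiable g" "s \<le> t"
  shows "arclength_fun g s \<le> arclength_fun g t"
  unfolding arclength_clamp using assms by (intro lr_mono) auto

lemma arclength_diff:
  assumes "rectifiable g" "0 \<le> a" "a \<le> b" "b \<le> 1"
  shows "arclength_fun g b - arclength_fun g a = lr g a b"
  using lr_add[OF assms(1), of 0 a b] assms by (simp add: arclength_at)

lemma arclength_0: "arclength_fun g 0 = 0"
  by (simp add: arclength_at lr_refl)

lemma arclength_cont:
  assumes "rectifiable g"
  shows "continuous_on UNIV (arclength_fun g)"
proof -
  have "uniformly_continuous_on UNIV (arclength_fun g)"
    unfolding uniformly_continuous_on_def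
  proof (intro allI impI)
    fix e :: real assume "e > 0"
    then obtain d where d: "d > 0" "\<And>s t. 0 \<le> s \<Longrightarrow> s \<le> t \<Longrightarrow> t \<le> 1 \<Longrightarrow> t - s < d \<Longrightarrow> lr g s t < e"
      using lr_unif[OF assms] by blast
    have *: "\<bar>arclength_fun g s - arclength_fun g t\<bar> < e" if "s \<le> t" "t - s < d" for s t
    proof -
      let ?s = "max 0 (min s 1)" and ?t = "max 0 (min t 1)"
      have "arclength_fun g t - arclength_fun g s = lr g ?s ?t"
        using arclength_diff[OF assms, of ?s ?t] that by (simp add: arclength_clamp)
      moreover have "lr g ?s ?t < e" using d(2)[of ?s ?t] that by auto
      moreover have "arclength_fun g s \<le> arclength_fun g t" using arclength_mono[OF assms that(1)] .
      ultimately show ?thesis by auto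
    qed
    show "\<exists>d>0. \<forall>x\<in>UNIV. \<forall>x'\<in>UNIV. dist x' x < d \<longrightarrow> dist (arclength_fun g x') (arclength_fun g x) < e"
    proof (intro exI[of _ d] conjI ballI impI d(1))
      fix x x' :: real assume "dist x' x < d"
      then have "\<bar>x' - x\<bar> < d" by (simp add: dist_real_def)
      show "dist (arclength_fun g x') (arclength_fun g x) < e"
      proof (cases "x \<le> x'")
        case True
        then have "\<bar>arclength_fun g x - arclength_fun g x'\<bar> < e" using *[of x x'] \<open>\<bar>x' - x\<bar> < d\<close> by simp
        then show ?thesis by (simp add: dist_real_def abs_minus_commute)
      next
        case False
        then show ?thesis using *[of x' x] \<open>\<bar>x' - x\<bar> < d\<close> by (simp add: dist_real_def)
      qed
    qed
  qed
  then show ?thesis by (rule uniformly_continuous_imp_continuous)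
qed





lemma cont_rc: "continuous_on UNIV F \<Longrightarrow> continuous (at_right a) (F :: real \<Rightarrow> real)"
  by (simp add: continuous_at_imp_continuous_at_within continuous_on_eq_continuous_at)

lemma measure_eq_Ioc:
  fixes M N :: "real measure"
  assumes sM: "sets M = sets borel" and sN: "sets N = sets borel"
    and eq: "\<And>a b. emeasure M {a<..b} = emeasure N {a<..b}"
    and fin: "\<And>a b. emeasure M {a<..b} \<noteq> \<infinity>"
  shows "M = N"
proof (rule measure_eqI_generator_eq_countable[where E="range (\<lambda>(a,b). {a<..b::real})"
      and \<Omega>=UNIV and A="range (\<lambda>n::nat. {-real n<..real n})"])
  show "Int_stable (range (\<lambda>(a, b). {a<..b::real}))"
  proof (rule Int_stableI)
    fix X Y assume "X \<in> range (\<lambda>(a, b). {a<..b::real})" "Y \<in> range (\<lambda>(a, b). {a<..b::real})"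
    then obtain a b c d where "X = {a<..b}" "Y = {c<..d}" by auto
    then have "X \<inter> Y = {max a c<..min b d}" by auto
    then show "X \<inter> Y \<in> range (\<lambda>(a, b). {a<..b::real})" by (auto intro!: image_eqI[of _ _ "(max a c, min b d)"])
  qed
  have "sets borel = sigma_sets UNIV (range (\<lambda>(a, b). {a<..b::real}))"
    by (subst borel_sigma_sets_Ioc) (simp add: sets_measure_of)
  then show "sets M = sigma_sets UNIV (range (\<lambda>(a, b). {a<..b::real}))"
    "sets N = sigma_sets UNIV (range (\<lambda>(a, b). {a<..b::real}))" using sM sN by auto
  show "\<Union> (range (\<lambda>n::nat. {- real n<..real n})) = UNIV"
  proof (intro equalityI subsetI)
    fix x :: real
    obtain n :: nat where "\<bar>x\<bar> < real n" using reals_Archimedean2 by blast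
    then have "x \<in> {- real n<..real n}" by auto
    then show "x \<in> \<Union> (range (\<lambda>n::nat. {- real n<..real n}))" by blast
  qed auto
qed (use eq fin in auto)

definition clampr :: "real \<Rightarrow> real \<Rightarrow> real \<Rightarrow> real" where
  "clampr u v t = max u (min t v)"

lemma im_Ioc_Icc:
  fixes F :: "real \<Rightarrow> real"
  assumes mono: "mono F" and cont: "continuous_on UNIV F" and uv: "u \<le> v" and ab: "a \<le> b"
  shows "emeasure (interval_measure F) ({a<..b} \<inter> {u..v}) = ennreal (F (clampr u v b) - F (clampr u v a))"
proof -
  have m: "\<And>x y. x \<le> y \<Longrightarrow> F x \<le> F y" using mono by (simp add: mono_def)
  have rc: "\<And>a. continuous (at_right a) F" using cont by (rule cont_rc)
  consider "b < u" | "v \<le> a" | "u \<le> b" "a < v" "a < u" | "u \<le> b" "a < v" "u \<le> a" by linarith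
  then show ?thesis
  proof cases
    case 1
    then have "{a<..b} \<inter> {u..v} = {}" by auto
    moreover have "clampr u v b = u" "clampr u v a = u" using 1 ab uv by (auto simp: clampr_def)
    ultimately show ?thesis by simp
  next
    case 2
    then have "{a<..b} \<inter> {u..v} = {}" by auto
    moreover have "clampr u v b = v" "clampr u v a = v" using 2 ab uv by (auto simp: clampr_def)
    ultimately show ?thesis by simp
  next
    case 3
    then have "{a<..b} \<inter> {u..v} = {u..min b v}" by auto
    moreover have "clampr u v b = min b v" "clampr u v a = u" using 3 ab uv by (auto simp: clampr_def)
    moreover have "emeasure (interval_measure F) {u..min b v} = F (min b v) - F u"
      by (rule emeasure_interval_measure_Icc) (use 3 uv m cont in auto)
    ultimately show ?thesis by simp
  next
    case 4
    then have "{a<..b} \<inter> {u..v} = {a<..min b v}" by auto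
    moreover have "clampr u v b = min b v" "clampr u v a = a" using 4 ab uv by (auto simp: clampr_def)
    moreover have "emeasure (interval_measure F) {a<..min b v} = F (min b v) - F a"
      by (rule emeasure_interval_measure_Ioc) (use 4 ab m rc in auto)
    ultimately show ?thesis by simp
  qed
qed

lemma restrict_interval_measure_eq:
  fixes F G :: "real \<Rightarrow> real"
  assumes "mono F" "continuous_on UNIV F" "mono G" "continuous_on UNIV G" "u \<le> v"
    and eq: "\<And>t. t \<in> {u..v} \<Longrightarrow> F t = G t"
  shows "restrict_space (interval_measure F) {u..v} = restrict_space (interval_measure G) {u..v}"
proof -
  define NF where "NF = density (interval_measure F) (indicator {u..v})"
  define NG where "NG = density (interval_measure G) (indicator {u..v})"
  have dens: "emeasure (density (interval_measure H) (indicator {u..v})) A = emeasure (interval_measure H) (A \<inter> {u..v})"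
    if "A \<in> sets borel" for H A
  proof -
    have "emeasure (density (interval_measure H) (indicator {u..v})) A =
      (\<integral>\<^sup>+x. indicator {u..v} x * indicator A x \<partial>interval_measure H)"
      using that by (subst emeasure_density) auto
    also have "\<dots> = (\<integral>\<^sup>+x. indicator (A \<inter> {u..v}) x \<partial>interval_measure H)"
      by (intro nn_integral_cong) (auto simp: indicator_def)
    also have "\<dots> = emeasure (interval_measure H) (A \<inter> {u..v})"
      using that by (intro nn_integral_indicator) auto
    finally show ?thesis .
  qed
  have cl: "clampr u v t \<in> {u..v}" for t using assms(5) by (auto simp: clampr_def)
  have "NF = NG"
  proof (rule measure_eq_Ioc)
    show "sets NF = sets borel" "sets NG = sets borel" by (auto simp: NF_def NG_def)
    fix a b :: real
    show "emeasure NF {a<..b} = emeasure NG {a<..b}"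
    proof (cases "a \<le> b")
      case True
      then show ?thesis unfolding NF_def NG_def
        by (simp add: dens im_Ioc_Icc[OF assms(1,2,5)] im_Ioc_Icc[OF assms(3,4,5)] eq[OF cl])
    next
      case False then show ?thesis by simp
    qed
    show "emeasure NF {a<..b} \<noteq> \<infinity>"
    proof (cases "a \<le> b")
      case True
      then show ?thesis unfolding NF_def by (simp add: dens im_Ioc_Icc[OF assms(1,2,5)])
    next
      case False then show ?thesis by simp
    qed
  qed
  show ?thesis
  proof (rule measure_eqI)
    show "sets (restrict_space (interval_measure F) {u..v}) = sets (restrict_space (interval_measure G) {u..v})"
      by (simp add: sets_restrict_space)
    fix A assume A: "A \<in> sets (restrict_space (interval_measure F) {u..v})"
    then have Ab: "A \<in> sets borel" "A \<subseteq> {u..v}"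
      by (auto simp: sets_restrict_space_iff)
    have "emeasure (restrict_space (interval_measure F) {u..v}) A = emeasure (interval_measure F) (A \<inter> {u..v})"
      using Ab by (subst emeasure_restrict_space) (auto simp: Int_absorb2)
    also have "\<dots> = emeasure NF A" unfolding NF_def using dens[OF Ab(1)] by simp
    also have "\<dots> = emeasure NG A" using \<open>NF = NG\<close> by simp
    also have "\<dots> = emeasure (interval_measure G) (A \<inter> {u..v})" unfolding NG_def using dens[OF Ab(1)] by simp
    also have "\<dots> = emeasure (restrict_space (interval_measure G) {u..v}) A"
      using Ab by (subst emeasure_restrict_space) (auto simp: Int_absorb2)
    finally show "emeasure (restrict_space (interval_measure F) {u..v}) A =
      emeasure (restrict_space (interval_measure G) {u..v}) A" .
  qed
qed

lemma interval_measure_affine: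
  fixes F :: "real \<Rightarrow> real"
  assumes mono: "mono F" and cont: "continuous_on UNIV F" and c: "c > 0"
  shows "interval_measure (\<lambda>t. F (c * t + e) + k) = distr (interval_measure F) borel (\<lambda>s. (s - e) / c)"
proof (rule measure_eq_Ioc)
  have m: "\<And>x y. x \<le> y \<Longrightarrow> F x \<le> F y" using mono by (simp add: mono_def)
  have rc: "\<And>a. continuous (at_right a) F" using cont by (rule cont_rc)
  have cont2: "continuous_on UNIV (\<lambda>t. F (c * t + e) + k)"
    by (intro continuous_intros continuous_on_compose2[OF cont]) auto
  have m2: "\<And>x y. x \<le> y \<Longrightarrow> F (c * x + e) + k \<le> F (c * y + e) + k"
    using m c by (simp add: mult_left_mono)
  show "sets (interval_measure (\<lambda>t. F (c * t + e) + k)) = sets borel" by simp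
  show "sets (distr (interval_measure F) borel (\<lambda>s. (s - e) / c)) = sets borel" by simp
  fix a b :: real
  show "emeasure (interval_measure (\<lambda>t. F (c * t + e) + k)) {a<..b} =
       emeasure (distr (interval_measure F) borel (\<lambda>s. (s - e) / c)) {a<..b}"
  proof (cases "a \<le> b")
    case True
    have "emeasure (interval_measure (\<lambda>t. F (c * t + e) + k)) {a<..b} = (F (c * b + e) + k) - (F (c * a + e) + k)"
      by (rule emeasure_interval_measure_Ioc[OF True m2 cont_rc[OF cont2]])
    moreover have "(\<lambda>s. (s - e) / c) -` {a<..b} \<inter> space (interval_measure F) = {c * a + e<..c * b + e}"
      using c by (auto simp: pos_less_divide_eq pos_divide_le_eq algebra_simps)
    moreover have "emeasure (interval_measure F) {c * a + e<..c * b + e} = F (c * b + e) - F (c * a + e)"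
      by (rule emeasure_interval_measure_Ioc[OF _ m rc]) (use True c in \<open>simp add: mult_left_mono\<close>)
    ultimately show ?thesis by (subst emeasure_distr) auto
  next
    case False then show ?thesis by simp
  qed
  show "emeasure (interval_measure (\<lambda>t. F (c * t + e) + k)) {a<..b} \<noteq> \<infinity>"
    by (cases "a \<le> b") (simp_all add: emeasure_interval_measure_Ioc[OF _ m2 cont_rc[OF cont2]])
qed





lemma meas_ind:
  fixes g :: "real \<Rightarrow> 'a::metric_space" and f :: "'a \<Rightarrow> ennreal"
  assumes g: "continuous_on {u..v} g" and f: "f \<in> borel_measurable borel"
  shows "(\<lambda>t. f (g t) * indicator {u..v} t) \<in> borel_measurable borel"
proof -
  have "(\<lambda>t. f (g t)) \<in> borel_measurable (restrict_space borel {u..v})"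
    using measurable_comp[OF borel_measurable_continuous_on_restrict[OF g] f] by (simp add: o_def)
  then have "(\<lambda>t. if t \<in> {u..v} then f (g t) else 0) \<in> borel_measurable borel"
    by (subst (asm) measurable_restrict_space_iff) auto
  moreover have "(\<lambda>t. if t \<in> {u..v} then f (g t) else 0) = (\<lambda>t. f (g t) * indicator {u..v} t)"
    by (auto simp: indicator_def)
  ultimately show ?thesis by simp
qed

lemma arc_mono: "rectifiable g \<Longrightarrow> mono (arclength_fun g)"
  by (simp add: mono_def arclength_mono)

lemma arc_mono': "rectifiable g \<Longrightarrow> x \<le> y \<Longrightarrow> arclength_fun g x \<le> arclength_fun g y"
  by (simp add: arclength_mono)

lemma arc_Icc:
  assumes "rectifiable g" "a \<le> b"
  shows "emeasure (interval_measure (arclength_fun g)) {a..b} = arclength_fun g b - arclength_fun g a"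
  by (rule emeasure_interval_measure_Icc) (use assms arclength_mono arclength_cont in auto)

lemma arc_Ioc:
  assumes "rectifiable g" "a \<le> b"
  shows "emeasure (interval_measure (arclength_fun g)) {a<..b} = arclength_fun g b - arclength_fun g a"
  by (rule emeasure_interval_measure_Ioc) (use assms arclength_mono cont_rc[OF arclength_cont] in auto)

lemma arc_1: "arclength_fun g 1 = lr g 0 1"
  by (simp add: arclength_at)

lemma li_upper:
  assumes "rectifiable g" "K \<ge> 0" "\<And>t. t \<in> {0..1} \<Longrightarrow> f (g t) \<le> ennreal K"
  shows "line_integral f g \<le> ennreal (K * lr g 0 1)"
proof -
  have "line_integral f g \<le> (\<integral>\<^sup>+t. ennreal K * indicator {0..1} t \<partial>interval_measure (arclength_fun g))"
    unfolding line_integral_def using assms(3)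
    by (intro nn_integral_mono) (auto simp: indicator_def)
  also have "\<dots> = ennreal K * emeasure (interval_measure (arclength_fun g)) {0..1}"
    by (rule nn_integral_cmult_indicator) simp
  also have "\<dots> = ennreal (K * lr g 0 1)"
    using arc_Icc[OF assms(1), of 0 1] by (simp add: arclength_0 arc_1 ennreal_mult assms(2) lr_nonneg)
  finally show ?thesis .
qed

lemma li_lower:
  assumes "rectifiable g" "K \<ge> 0" "\<And>t. t \<in> {0..1} \<Longrightarrow> ennreal K \<le> f (g t)"
  shows "ennreal (K * lr g 0 1) \<le> line_integral f g"
proof -
  have "ennreal (K * lr g 0 1) = ennreal K * emeasure (interval_measure (arclength_fun g)) {0..1}"
    using arc_Icc[OF assms(1), of 0 1] by (simp add: arclength_0 arc_1 ennreal_mult assms(2) lr_nonneg)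
  also have "\<dots> = (\<integral>\<^sup>+t. ennreal K * indicator {0..1} t \<partial>interval_measure (arclength_fun g))"
    by (rule nn_integral_cmult_indicator[symmetric]) simp
  also have "\<dots> \<le> line_integral f g"
    unfolding line_integral_def using assms(3)
    by (intro nn_integral_mono) (auto simp: indicator_def)
  finally show ?thesis .
qed

lemma split_Ioc_integral:
  fixes F :: "real \<Rightarrow> real"
  assumes h: "h \<in> borel_measurable borel" and "a \<le> m" "m \<le> b"
  shows "(\<integral>\<^sup>+t. h t * indicator {a<..b} t \<partial>interval_measure F) =
    (\<integral>\<^sup>+t. h t * indicator {a<..m} t \<partial>interval_measure F) + (\<integral>\<^sup>+t. h t * indicator {m<..b} t \<partial>interval_measure F)"
proof -
  have "(\<lambda>t. h t * indicator {a<..b} t) = (\<lambda>t. h t * indicator {a<..m} t + h t * indicator {m<..b} t)"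
    using assms(2,3) by (auto simp: indicator_def fun_eq_iff)
  then show ?thesis using h by (simp add: nn_integral_add)
qed

lemma chain_fwd:
  fixes F :: "real \<Rightarrow> real"
  assumes mono: "mono F" and cont: "continuous_on UNIV F" and h: "h \<in> borel_measurable borel"
  shows "0 < c \<Longrightarrow> a \<le> b \<Longrightarrow> (2 ^ n - 1) * c \<le> F b - F a \<Longrightarrow>
    (\<And>t. t \<in> {a<..b} \<Longrightarrow> ennreal (1 / (c + F t - F a)) \<le> h t) \<Longrightarrow>
    ennreal (real n / 2) \<le> (\<integral>\<^sup>+t. h t * indicator {a<..b} t \<partial>interval_measure F)"
proof (induction n arbitrary: a c)
  case 0 then show ?case by simp
next
  case (Suc n)
  have m: "\<And>x y. x \<le> y \<Longrightarrow> F x \<le> F y" using mono by (simp add: mono_def)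
  have rc: "\<And>a. continuous (at_right a) F" using cont by (rule cont_rc)
  have "(1::real) \<le> 2 ^ Suc n - 1" by (simp add: Suc_le_eq)
  then have "c \<le> (2 ^ Suc n - 1) * c" using Suc.prems(1) by simp
  then have "F a + c \<le> F b" using Suc.prems(3) by linarith
  then obtain a' where a': "a \<le> a'" "a' \<le> b" "F a' = F a + c"
    using IVT'[of F a "F a + c" b] Suc.prems(1,2) continuous_on_subset[OF cont] by auto
  have I1: "ennreal (1/2) \<le> (\<integral>\<^sup>+t. h t * indicator {a<..a'} t \<partial>interval_measure F)"
  proof -
    have "ennreal (1/2) = ennreal (1 / (2 * c)) * emeasure (interval_measure F) {a<..a'}"
      using emeasure_interval_measure_Ioc[OF a'(1) m rc] a'(3) Suc.prems(1)
      by (simp add: ennreal_mult[symmetric])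
    also have "\<dots> = (\<integral>\<^sup>+t. ennreal (1 / (2 * c)) * indicator {a<..a'} t \<partial>interval_measure F)"
      by (rule nn_integral_cmult_indicator[symmetric]) simp
    also have "\<dots> \<le> (\<integral>\<^sup>+t. h t * indicator {a<..a'} t \<partial>interval_measure F)"
    proof (intro nn_integral_mono)
      fix t
      show "ennreal (1 / (2 * c)) * indicator {a<..a'} t \<le> h t * indicator {a<..a'} t"
      proof (cases "t \<in> {a<..a'}")
        case True
        then have "F t \<le> F a'" "F a \<le> F t" using m by auto
        then have "1 / (2 * c) \<le> 1 / (c + F t - F a)" using a'(3) Suc.prems(1)
          by (intro divide_left_mono) auto
        moreover have "t \<in> {a<..b}" using True a' by auto
        then have "ennreal (1 / (c + F t - F a)) \<le> h t" by (rule Suc.prems(4))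
        ultimately have "ennreal (1 / (2 * c)) \<le> h t"
          using ennreal_leI order_trans by blast
        then show ?thesis using True by simp
      qed simp
    qed
    finally show ?thesis .
  qed
  have I2: "ennreal (real n / 2) \<le> (\<integral>\<^sup>+t. h t * indicator {a'<..b} t \<partial>interval_measure F)"
  proof (rule Suc.IH)
    show "0 < 2 * c" using Suc.prems(1) by simp
    show "a' \<le> b" by fact
    have "(2 ^ n - 1) * (2 * c) = (2 ^ Suc n - 1) * c - c" by (simp add: algebra_simps)
    then show "(2 ^ n - 1) * (2 * c) \<le> F b - F a'" using Suc.prems(3) a'(3) by linarith
    fix t assume t: "t \<in> {a'<..b}"
    have eq: "2 * c + F t - F a' = c + F t - F a" using a'(3) by simp
    have "t \<in> {a<..b}" using t a'(1) by auto
    then have "ennreal (1 / (c + F t - F a)) \<le> h t" by (rule Suc.prems(4))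
    then show "ennreal (1 / (2 * c + F t - F a')) \<le> h t" unfolding eq .
  qed
  have "ennreal (real (Suc n) / 2) = ennreal (1/2) + ennreal (real n / 2)"
    by (simp add: ennreal_plus[symmetric] add_divide_distrib)
  also have "\<dots> \<le> (\<integral>\<^sup>+t. h t * indicator {a<..a'} t \<partial>interval_measure F) +
      (\<integral>\<^sup>+t. h t * indicator {a'<..b} t \<partial>interval_measure F)"
    using I1 I2 by (rule add_mono)
  also have "\<dots> = (\<integral>\<^sup>+t. h t * indicator {a<..b} t \<partial>interval_measure F)"
    using split_Ioc_integral[OF h a'(1,2)] by simp
  finally show ?case .
qed

lemma chain_bwd:
  fixes F :: "real \<Rightarrow> real"
  assumes mono: "mono F" and cont: "continuous_on UNIV F" and h: "h \<in> borel_measurable borel"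
  shows "0 < c \<Longrightarrow> a \<le> b \<Longrightarrow> (2 ^ n - 1) * c \<le> F b - F a \<Longrightarrow>
    (\<And>t. t \<in> {a<..b} \<Longrightarrow> ennreal (1 / (c + F b - F t)) \<le> h t) \<Longrightarrow>
    ennreal (real n / 2) \<le> (\<integral>\<^sup>+t. h t * indicator {a<..b} t \<partial>interval_measure F)"
proof (induction n arbitrary: b c)
  case 0 then show ?case by simp
next
  case (Suc n)
  have m: "\<And>x y. x \<le> y \<Longrightarrow> F x \<le> F y" using mono by (simp add: mono_def)
  have rc: "\<And>a. continuous (at_right a) F" using cont by (rule cont_rc)
  have "(1::real) \<le> 2 ^ Suc n - 1" by (simp add: Suc_le_eq)
  then have "c \<le> (2 ^ Suc n - 1) * c" using Suc.prems(1) by simp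
  then have "F a \<le> F b - c" using Suc.prems(3) by linarith
  moreover have "F b - c \<le> F b" using Suc.prems(1) by simp
  ultimately obtain b' where b': "a \<le> b'" "b' \<le> b" "F b' = F b - c"
    using IVT'[of F a "F b - c" b] Suc.prems(1,2) continuous_on_subset[OF cont] by auto
  have I1: "ennreal (1/2) \<le> (\<integral>\<^sup>+t. h t * indicator {b'<..b} t \<partial>interval_measure F)"
  proof -
    have "ennreal (1/2) = ennreal (1 / (2 * c)) * emeasure (interval_measure F) {b'<..b}"
      using emeasure_interval_measure_Ioc[OF b'(2) m rc] b'(3) Suc.prems(1)
      by (simp add: ennreal_mult[symmetric])
    also have "\<dots> = (\<integral>\<^sup>+t. ennreal (1 / (2 * c)) * indicator {b'<..b} t \<partial>interval_measure F)"
      by (rule nn_integral_cmult_indicator[symmetric]) simp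
    also have "\<dots> \<le> (\<integral>\<^sup>+t. h t * indicator {b'<..b} t \<partial>interval_measure F)"
    proof (intro nn_integral_mono)
      fix t
      show "ennreal (1 / (2 * c)) * indicator {b'<..b} t \<le> h t * indicator {b'<..b} t"
      proof (cases "t \<in> {b'<..b}")
        case True
        then have "F b' \<le> F t" "F t \<le> F b" using m by auto
        then have "1 / (2 * c) \<le> 1 / (c + F b - F t)" using b'(3) Suc.prems(1)
          by (intro divide_left_mono) auto
        moreover have "t \<in> {a<..b}" using True b' by auto
        then have "ennreal (1 / (c + F b - F t)) \<le> h t" by (rule Suc.prems(4))
        ultimately have "ennreal (1 / (2 * c)) \<le> h t"
          using ennreal_leI order_trans by blast
        then show ?thesis using True by simp
      qed simp
    qed
    finally show ?thesis .
  qed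
  have I2: "ennreal (real n / 2) \<le> (\<integral>\<^sup>+t. h t * indicator {a<..b'} t \<partial>interval_measure F)"
  proof (rule Suc.IH)
    show "0 < 2 * c" using Suc.prems(1) by simp
    show "a \<le> b'" by fact
    have "(2 ^ n - 1) * (2 * c) = (2 ^ Suc n - 1) * c - c" by (simp add: algebra_simps)
    then show "(2 ^ n - 1) * (2 * c) \<le> F b' - F a" using Suc.prems(3) b'(3) by linarith
    fix t assume t: "t \<in> {a<..b'}"
    have eq: "2 * c + F b' - F t = c + F b - F t" using b'(3) by simp
    have "t \<in> {a<..b}" using t b'(2) by auto
    then have "ennreal (1 / (c + F b - F t)) \<le> h t" by (rule Suc.prems(4))
    then show "ennreal (1 / (2 * c + F b' - F t)) \<le> h t" unfolding eq .
  qed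
  have "ennreal (real (Suc n) / 2) = ennreal (real n / 2) + ennreal (1/2)"
    by (simp add: ennreal_plus[symmetric] add_divide_distrib)
  also have "\<dots> \<le> (\<integral>\<^sup>+t. h t * indicator {a<..b'} t \<partial>interval_measure F) +
      (\<integral>\<^sup>+t. h t * indicator {b'<..b} t \<partial>interval_measure F)"
    using I2 I1 by (rule add_mono)
  also have "\<dots> = (\<integral>\<^sup>+t. h t * indicator {a<..b} t \<partial>interval_measure F)"
    using split_Ioc_integral[OF h b'(1,2)] by simp
  finally show ?case .
qed





lemma piece:
  fixes Fj F :: "real \<Rightarrow> real" and j \<gamma> :: "real \<Rightarrow> 'a::metric_space" and f :: "'a \<Rightarrow> ennreal"
  assumes Fj: "mono Fj" "continuous_on UNIV Fj" and F: "mono F" "continuous_on UNIV F"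
    and c: "c > 0" and uv: "u \<le> v"
    and eqF: "\<And>t. t \<in> {u..v} \<Longrightarrow> Fj t = F (c * t + e) + k"
    and eqj: "\<And>t. t \<in> {u..v} \<Longrightarrow> j t = \<gamma> (c * t + e)"
    and g: "continuous_on {0..1} \<gamma>" and f: "f \<in> borel_measurable borel"
    and cu: "c * u + e = 0" and cv: "c * v + e = 1"
  shows "(\<integral>\<^sup>+t. f (j t) * indicator {u..v} t \<partial>interval_measure Fj) =
         (\<integral>\<^sup>+s. f (\<gamma> s) * indicator {0..1} s \<partial>interval_measure F)"
proof -
  define G where "G = (\<lambda>t. F (c * t + e) + k)"
  have mG: "mono G" using F(1) c unfolding G_def mono_def by (simp add: mult_left_mono)
  have cG: "continuous_on UNIV G" unfolding G_def
    by (intro continuous_intros continuous_on_compose2[OF F(2)]) auto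
  have map01: "c * t + e \<in> {0..1}" if "t \<in> {u..v}" for t
  proof -
    have "c * u \<le> c * t" "c * t \<le> c * v" using that c by (auto simp: mult_left_mono)
    then show ?thesis using cu cv by auto
  qed
  have cg2: "continuous_on {u..v} (\<lambda>t. \<gamma> (c * t + e))"
  proof (rule continuous_on_compose2[OF g])
    show "continuous_on {u..v} (\<lambda>t. c * t + e)" by (intro continuous_intros)
    show "(\<lambda>t. c * t + e) ` {u..v} \<subseteq> {0..1}" using map01 by auto
  qed
  have meas: "(\<lambda>t. f (\<gamma> (c * t + e)) * indicator {u..v} t) \<in> borel_measurable borel"
    by (rule meas_ind[OF cg2 f])
  have "(\<integral>\<^sup>+t. f (j t) * indicator {u..v} t \<partial>interval_measure Fj) =
        (\<integral>\<^sup>+t. f (\<gamma> (c * t + e)) * indicator {u..v} t \<partial>interval_measure Fj)"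
    by (intro nn_integral_cong) (auto simp: indicator_def eqj)
  also have "\<dots> = nn_integral (restrict_space (interval_measure Fj) {u..v}) (\<lambda>t. f (\<gamma> (c * t + e)))"
    by (rule nn_integral_restrict_space[symmetric]) simp
  also have "restrict_space (interval_measure Fj) {u..v} = restrict_space (interval_measure G) {u..v}"
    by (rule restrict_interval_measure_eq[OF Fj mG cG uv]) (simp add: eqF G_def)
  also have "nn_integral (restrict_space (interval_measure G) {u..v}) (\<lambda>t. f (\<gamma> (c * t + e))) =
      (\<integral>\<^sup>+t. f (\<gamma> (c * t + e)) * indicator {u..v} t \<partial>interval_measure G)"
    by (rule nn_integral_restrict_space) simp
  also have "interval_measure G = distr (interval_measure F) borel (\<lambda>s. (s - e) / c)"
    unfolding G_def by (rule interval_measure_affine[OF F c])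
  also have "(\<integral>\<^sup>+t. f (\<gamma> (c * t + e)) * indicator {u..v} t \<partial>distr (interval_measure F) borel (\<lambda>s. (s - e) / c)) =
     (\<integral>\<^sup>+s. f (\<gamma> (c * ((s - e) / c) + e)) * indicator {u..v} ((s - e) / c) \<partial>interval_measure F)"
    by (rule nn_integral_distr) (use meas in auto)
  also have "\<dots> = (\<integral>\<^sup>+s. f (\<gamma> s) * indicator {0..1} s \<partial>interval_measure F)"
  proof (intro nn_integral_cong)
    fix s :: real
    have e1: "c * ((s - e) / c) + e = s" using c by simp
    have "((s - e) / c \<in> {u..v}) = (s \<in> {0..1})"
      using c cu cv by (auto simp: pos_le_divide_eq pos_divide_le_eq algebra_simps)
    then show "f (\<gamma> (c * ((s - e) / c) + e)) * indicator {u..v} ((s - e) / c) = f (\<gamma> s) * indicator {0..1} s"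
      unfolding e1 by (simp add: indicator_def)
  qed
  finally show ?thesis .
qed

lemma enn2real_add_fin: "a \<noteq> \<infinity> \<Longrightarrow> b \<noteq> \<infinity> \<Longrightarrow> enn2real (a + b) = enn2real a + enn2real b"
  by (simp add: enn2real_plus less_top)

lemma join_facts:
  fixes \<gamma> \<sigma> :: "real \<Rightarrow> 'a::metric_space"
  assumes r1: "rectifiable \<gamma>" and r2: "rectifiable \<sigma>" and pf: "pathfinish \<gamma> = pathstart \<sigma>"
  shows "rectifiable (\<gamma> +++ \<sigma>)"
    and "\<And>t. t \<in> {0..1/2} \<Longrightarrow> arclength_fun (\<gamma> +++ \<sigma>) t = arclength_fun \<gamma> (2 * t + 0) + 0"
    and "\<And>t. t \<in> {1/2..1} \<Longrightarrow> arclength_fun (\<gamma> +++ \<sigma>) t = arclength_fun \<sigma> (2 * t + - 1) + lr \<gamma> 0 1"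
proof -
  let ?j = "\<gamma> +++ \<sigma>"
  have L1: "curve_length ?j 0 t = curve_length \<gamma> 0 (2 * t)" if "t \<in> {0..1/2}" for t
  proof -
    have "curve_length ?j 0 t = curve_length (\<lambda>s. \<gamma> (2 * s + 0)) 0 t"
      by (rule length_cong) (use that in \<open>auto simp: joinpaths_def\<close>)
    also have "\<dots> = curve_length \<gamma> (2 * 0 + 0) (2 * t + 0)" by (rule length_affine) simp
    finally show ?thesis by simp
  qed
  have L2: "curve_length ?j (1/2) t = curve_length \<sigma> 0 (2 * t + - 1)" if "t \<in> {1/2..1}" for t
  proof -
    have "curve_length ?j (1/2) t = curve_length (\<lambda>s. \<sigma> (2 * s + - 1)) (1/2) t"
    proof (rule length_cong)
      fix s assume s: "s \<in> {1/2..t}"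
      show "?j s = \<sigma> (2 * s + - 1)"
      proof (cases "s = 1/2")
        case True
      show ?thesis unfolding True using pf by (simp add: joinpaths_def pathfinish_def pathstart_def)
      next
        case False then show ?thesis using s by (simp add: joinpaths_def)
      qed
    qed
    also have "\<dots> = curve_length \<sigma> (2 * (1/2) + - 1) (2 * t + - 1)" by (rule length_affine) simp
    finally show ?thesis by simp
  qed
  have Lfull: "curve_length ?j 0 t = curve_length \<gamma> 0 1 + curve_length \<sigma> 0 (2 * t + - 1)"
    if "t \<in> {1/2..1}" for t
    using length_add[of 0 "1/2" t ?j] L1[of "1/2"] L2[OF that] that by simp
  have pj: "path ?j" using r1 r2 pf by (auto simp: rectifiable_def intro: path_join_imp)
  have f1: "curve_length \<gamma> 0 1 < \<infinity>" using r1 by (simp add: rectifiable_def)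
  have f2: "curve_length \<sigma> 0 s < \<infinity>" if "s \<in> {0..1}" for s using rect_finite[OF r2] that by auto
  show "rectifiable ?j"
    unfolding rectifiable_def using pj Lfull[of 1] f1 f2[of 1] by simp
  show "arclength_fun ?j t = arclength_fun \<gamma> (2 * t + 0) + 0" if "t \<in> {0..1/2}" for t
    using that L1[OF that] by (simp add: arclength_at lr_def)
  show "arclength_fun ?j t = arclength_fun \<sigma> (2 * t + - 1) + lr \<gamma> 0 1" if "t \<in> {1/2..1}" for t
  proof -
    have "arclength_fun ?j t = enn2real (curve_length \<gamma> 0 1 + curve_length \<sigma> 0 (2 * t + - 1))"
      using that Lfull[OF that] by (simp add: arclength_at lr_def)
    also have "\<dots> = lr \<gamma> 0 1 + lr \<sigma> 0 (2 * t + - 1)"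
      using f1 f2[of "2 * t + - 1"] that by (subst enn2real_add_fin) (auto simp: lr_def)
    also have "lr \<sigma> 0 (2 * t + - 1) = arclength_fun \<sigma> (2 * t + - 1)"
      using that by (simp add: arclength_at)
    finally show ?thesis by simp
  qed
qed

lemma li_join:
  fixes \<gamma> \<sigma> :: "real \<Rightarrow> 'a::metric_space" and f :: "'a \<Rightarrow> ennreal"
  assumes r1: "rectifiable \<gamma>" and r2: "rectifiable \<sigma>" and pf: "pathfinish \<gamma> = pathstart \<sigma>"
    and f: "f \<in> borel_measurable borel"
  shows "line_integral f (\<gamma> +++ \<sigma>) \<le> line_integral f \<gamma> + line_integral f \<sigma>"
proof -
  let ?j = "\<gamma> +++ \<sigma>"
  note jf = join_facts[OF r1 r2 pf]
  have pj: "path ?j" using jf(1) by (simp add: rectifiable_def)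
  let ?M = "interval_measure (arclength_fun ?j)"
  have cj: "continuous_on {0..1} ?j" using pj by (simp add: path_def)
  have m1: "(\<lambda>t. f (?j t) * indicator {0..1/2} t) \<in> borel_measurable borel"
    by (rule meas_ind[OF continuous_on_subset[OF cj] f]) auto
  have m2: "(\<lambda>t. f (?j t) * indicator {1/2..1} t) \<in> borel_measurable borel"
    by (rule meas_ind[OF continuous_on_subset[OF cj] f]) auto
  have "line_integral f ?j \<le> (\<integral>\<^sup>+t. f (?j t) * indicator {0..1/2} t + f (?j t) * indicator {1/2..1} t \<partial>?M)"
    unfolding line_integral_def by (intro nn_integral_mono) (auto simp: indicator_def)
  also have "\<dots> = (\<integral>\<^sup>+t. f (?j t) * indicator {0..1/2} t \<partial>?M) + (\<integral>\<^sup>+t. f (?j t) * indicator {1/2..1} t \<partial>?M)"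
    using m1 m2 by (simp add: nn_integral_add)
  also have "(\<integral>\<^sup>+t. f (?j t) * indicator {0..1/2} t \<partial>?M) = line_integral f \<gamma>"
    unfolding line_integral_def
    by (rule piece[where c=2 and e=0 and k=0])
       (use jf r1 f in \<open>auto simp: arc_mono arclength_cont joinpaths_def path_def rectifiable_def\<close>)
  also have "(\<integral>\<^sup>+t. f (?j t) * indicator {1/2..1} t \<partial>?M) = line_integral f \<sigma>"
    unfolding line_integral_def
  proof (rule piece[where c=2 and e="-1" and k="lr \<gamma> 0 1"])
    fix t :: real assume t: "t \<in> {1/2..1}"
    show "?j t = \<sigma> (2 * t + - 1)"
    proof (cases "t = 1/2")
      case True
      show ?thesis unfolding True using pf by (simp add: joinpaths_def pathfinish_def pathstart_def)
    next
      case False then show ?thesis using t by (simp add: joinpaths_def)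
    qed
  qed (use jf r2 f in \<open>auto simp: arc_mono arclength_cont path_def rectifiable_def\<close>)
  finally show ?thesis .
qed





definition adm :: "'a::metric_space set \<Rightarrow> 'a \<Rightarrow> 'a \<Rightarrow> (real \<Rightarrow> 'a) \<Rightarrow> bool" where
  "adm \<Omega> x y g \<longleftrightarrow> curve_in \<Omega> g \<and> rectifiable g \<and> pathstart g = x \<and> pathfinish g = y"

lemma adm_rect: "adm \<Omega> x y g \<Longrightarrow> rectifiable g" by (simp add: adm_def)

lemma adm_pt: "adm \<Omega> x y g \<Longrightarrow> t \<in> {0..1} \<Longrightarrow> g t \<in> \<Omega>"
  by (auto simp: adm_def curve_in_def path_image_def)

lemma adm_dist0:
  assumes "adm \<Omega> x y g" "t \<in> {0..1}"
  shows "dist x (g t) \<le> arclength_fun g t"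
  using lr_ge_dist[OF adm_rect[OF assms(1)], of 0 t] assms
  by (auto simp: arclength_at adm_def pathstart_def)

lemma adm_dist1:
  assumes "adm \<Omega> x y g" "t \<in> {0..1}"
  shows "dist (g t) y \<le> lr g 0 1 - arclength_fun g t"
proof -
  have "dist (g t) (g 1) \<le> lr g t 1" using lr_ge_dist[OF adm_rect[OF assms(1)], of t 1] assms by auto
  moreover have "arclength_fun g 1 - arclength_fun g t = lr g t 1"
    using arclength_diff[OF adm_rect[OF assms(1)], of t 1] assms by auto
  ultimately show ?thesis using assms by (auto simp: arc_1 adm_def pathfinish_def)
qed

lemma adm_arc_bounds:
  assumes "adm \<Omega> x y g" "t \<in> {0..1}"
  shows "0 \<le> arclength_fun g t" "arclength_fun g t \<le> lr g 0 1"
  using arclength_mono[OF adm_rect[OF assms(1)], of 0 t] arclength_mono[OF adm_rect[OF assms(1)], of t 1] assms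
  by (auto simp: arclength_0 arc_1)

lemma adm_join:
  assumes "adm \<Omega> x y g" "adm \<Omega> y z h"
  shows "adm \<Omega> x z (g +++ h)"
proof -
  have "pathfinish g = pathstart h" using assms by (simp add: adm_def)
  then show ?thesis using assms join_facts(1)[of g h] path_image_join_subset[of g h]
    by (auto simp: adm_def curve_in_def intro: path_join_imp)
qed

lemma qh_le: "adm \<Omega> x y g \<Longrightarrow> qh_dist \<Omega> x y \<le> line_integral (\<lambda>z. ennreal (1 / dist_bdry \<Omega> z)) g"
  unfolding qh_dist_def by (rule INF_lower) (simp add: adm_def)

lemma qh_lt:
  assumes "qh_dist \<Omega> x y < r"
  obtains g where "adm \<Omega> x y g" "line_integral (\<lambda>z. ennreal (1 / dist_bdry \<Omega> z)) g < r"
  using assms unfolding qh_dist_def INF_less_iff by (auto simp: adm_def)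

locale qhs =
  fixes \<Omega> :: "'a::complete_space set" and L :: real
  assumes qc: "quasiconvex L \<Omega>" and nc: "\<not> complete \<Omega>"
    and oc: "openin (top_of_set (closure \<Omega>)) \<Omega>"
begin

lemma bdry_ne: "bdry_compl \<Omega> \<noteq> {}"
proof
  assume "bdry_compl \<Omega> = {}"
  then have "closure \<Omega> \<subseteq> \<Omega>" by (auto simp: bdry_compl_def)
  then have "closed \<Omega>" by (simp add: closure_subset_eq)
  then show False using nc complete_eq_closed[of \<Omega>] by simp
qed

lemma d_pos: "x \<in> \<Omega> \<Longrightarrow> 0 < dist_bdry \<Omega> x"
proof -
  assume x: "x \<in> \<Omega>"
  obtain T where T: "open T" "\<Omega> = closure \<Omega> \<inter> T" using oc by (auto simp: openin_open)
  then have "x \<in> T" using x by auto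
  then obtain e where e: "e > 0" "ball x e \<subseteq> T" using T(1) open_contains_ball by blast
  have "e \<le> dist x z" if "z \<in> bdry_compl \<Omega>" for z
  proof (rule ccontr)
    assume "\<not> e \<le> dist x z"
    then have "z \<in> T" using e by auto
    then have "z \<in> \<Omega>" using that T(2) by (auto simp: bdry_compl_def)
    then show False using that by (auto simp: bdry_compl_def)
  qed
  then have "e \<le> infdist x (bdry_compl \<Omega>)"
    unfolding infdist_notempty[OF bdry_ne] by (intro cINF_greatest bdry_ne) auto
  then show ?thesis using e by (simp add: dist_bdry_def)
qed

lemma d_lip: "dist_bdry \<Omega> y \<le> dist_bdry \<Omega> x + dist x y"
  unfolding dist_bdry_def using infdist_triangle[of y "bdry_compl \<Omega>" x] by (simp add: dist_commute)

lemma d_nonneg: "0 \<le> dist_bdry \<Omega> x"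
  by (simp add: dist_bdry_def infdist_nonneg)

lemma d_cont: "continuous_on UNIV (dist_bdry \<Omega>)"
  unfolding dist_bdry_def by (intro continuous_intros)

lemma wf_meas: "(\<lambda>z. ennreal (1 / dist_bdry \<Omega> z)) \<in> borel_measurable borel"
proof -
  have "dist_bdry \<Omega> \<in> borel_measurable borel" using d_cont by (rule borel_measurable_continuous_onI)
  then have "(\<lambda>z. 1 / dist_bdry \<Omega> z) \<in> borel_measurable borel" by measurable
  then show ?thesis by measurable
qed

lemma two_points: "\<exists>x\<in>\<Omega>. \<exists>y\<in>\<Omega>. x \<noteq> y"
proof (rule ccontr)
  assume "\<not> ?thesis"
  then have sub: "x \<in> \<Omega> \<Longrightarrow> \<Omega> \<subseteq> {x}" for x by blast
  have "finite \<Omega>"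
  proof (cases "\<Omega> = {}")
    case False
    then obtain x where "x \<in> \<Omega>" by blast
    then show ?thesis using sub finite_subset by blast
  qed simp
  then have "closed \<Omega>" by (rule finite_imp_closed)
  then show False using nc complete_eq_closed[of \<Omega>] by simp
qed

lemma qc_curve:
  assumes "x \<in> \<Omega>" "y \<in> \<Omega>"
  obtains g where "adm \<Omega> x y g" "lr g 0 1 \<le> L * dist x y"
proof -
  obtain g where g: "curve_in \<Omega> g" "pathstart g = x" "pathfinish g = y"
    "curve_length g 0 1 \<le> ennreal (L * dist x y)"
  proof -
    have "\<exists>g. curve_in \<Omega> g \<and> pathstart g = x \<and> pathfinish g = y \<and> curve_length g 0 1 \<le> ennreal (L * dist x y)"
      using qc assms unfolding quasiconvex_def by simp
    then show ?thesis using that by (elim exE conjE) simp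
  qed
  have "curve_length g 0 1 < \<infinity>" by (rule le_less_trans[OF g(4)]) simp
  then have r: "rectifiable g" using g by (auto simp: rectifiable_def curve_in_def)
  have "ennreal (lr g 0 1) \<le> ennreal (L * dist x y)" using g(4) rect_ennreal[OF r, of 0 1] by simp
  moreover have "0 \<le> L * dist x y"
  proof (rule ccontr)
    assume "\<not> 0 \<le> L * dist x y"
    then have "ennreal (L * dist x y) = 0" by (simp add: ennreal_neg)
    then have "curve_length g 0 1 = 0" using g(4) by simp
    moreover have "ennreal (dist (g 0) (g 1)) \<le> curve_length g 0 1" by (rule length_ge_dist) simp
    ultimately have "g 0 = g 1" by simp
    then have "x = y" using g by (simp add: pathstart_def pathfinish_def)
    then show False using \<open>\<not> 0 \<le> L * dist x y\<close> by simp
  qed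
  ultimately have "lr g 0 1 \<le> L * dist x y" by (simp add: ennreal_le_iff)
  then show ?thesis using that g r by (auto simp: adm_def)
qed

lemma L_ge1: "1 \<le> L"
proof -
  obtain x y where xy: "x \<in> \<Omega>" "y \<in> \<Omega>" "x \<noteq> y" using two_points by blast
  obtain g where g: "adm \<Omega> x y g" "lr g 0 1 \<le> L * dist x y" using qc_curve[OF xy(1,2)] by blast
  have "dist x y \<le> lr g 0 1"
    using lr_ge_dist[OF adm_rect[OF g(1)], of 0 1] g(1) by (simp add: adm_def pathstart_def pathfinish_def)
  then have "1 * dist x y \<le> L * dist x y" using g(2) by simp
  then show ?thesis using xy(3) by simp
qed

lemma d_along:
  assumes "adm \<Omega> x y g" "t \<in> {0..1}"
  shows "dist_bdry \<Omega> (g t) \<le> dist_bdry \<Omega> x + arclength_fun g t"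
    "dist_bdry \<Omega> x - arclength_fun g t \<le> dist_bdry \<Omega> (g t)"
    "dist_bdry \<Omega> (g t) \<le> dist_bdry \<Omega> y + (lr g 0 1 - arclength_fun g t)"
    "0 < dist_bdry \<Omega> (g t)"
  using d_lip[of "g t" x] d_lip[of x "g t"] d_lip[of "g t" y] adm_dist0[OF assms] adm_dist1[OF assms]
    d_pos[OF adm_pt[OF assms]]
  by (auto simp: dist_commute)

lemma LB_crude:
  assumes "adm \<Omega> x y g" "x \<in> \<Omega>"
  shows "ennreal (lr g 0 1 / (dist_bdry \<Omega> x + lr g 0 1)) \<le> line_integral (\<lambda>z. ennreal (1 / dist_bdry \<Omega> z)) g"
proof -
  have dx: "0 < dist_bdry \<Omega> x" using d_pos[OF assms(2)] .
  have "ennreal (1 / (dist_bdry \<Omega> x + lr g 0 1) * lr g 0 1) \<le> line_integral (\<lambda>z. ennreal (1 / dist_bdry \<Omega> z)) g"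
  proof (rule li_lower[OF adm_rect[OF assms(1)]])
    show "0 \<le> 1 / (dist_bdry \<Omega> x + lr g 0 1)" using dx lr_nonneg[of g 0 1] by simp
    fix t :: real assume t: "t \<in> {0..1}"
    have "dist_bdry \<Omega> (g t) \<le> dist_bdry \<Omega> x + lr g 0 1"
      using d_along(1)[OF assms(1) t] adm_arc_bounds[OF assms(1) t] by linarith
    then have "1 / (dist_bdry \<Omega> x + lr g 0 1) \<le> 1 / dist_bdry \<Omega> (g t)"
      using d_along(4)[OF assms(1) t] by (intro divide_left_mono) auto
    then show "ennreal (1 / (dist_bdry \<Omega> x + lr g 0 1)) \<le> ennreal (1 / dist_bdry \<Omega> (g t))"
      by (rule ennreal_leI)
  qed
  then show ?thesis by simp
qed

lemma UB:
  assumes "adm \<Omega> x y g" "x \<in> \<Omega>" "lr g 0 1 < dist_bdry \<Omega> x"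
  shows "line_integral (\<lambda>z. ennreal (1 / dist_bdry \<Omega> z)) g \<le> ennreal (lr g 0 1 / (dist_bdry \<Omega> x - lr g 0 1))"
proof -
  have "line_integral (\<lambda>z. ennreal (1 / dist_bdry \<Omega> z)) g \<le> ennreal (1 / (dist_bdry \<Omega> x - lr g 0 1) * lr g 0 1)"
  proof (rule li_upper[OF adm_rect[OF assms(1)]])
    show "0 \<le> 1 / (dist_bdry \<Omega> x - lr g 0 1)" using assms(3) by simp
    fix t :: real assume t: "t \<in> {0..1}"
    have "dist_bdry \<Omega> x - lr g 0 1 \<le> dist_bdry \<Omega> (g t)"
      using d_along(2)[OF assms(1) t] adm_arc_bounds[OF assms(1) t] by linarith
    then have "1 / dist_bdry \<Omega> (g t) \<le> 1 / (dist_bdry \<Omega> x - lr g 0 1)"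
      using assms(3) by (intro divide_left_mono) auto
    then show "ennreal (1 / dist_bdry \<Omega> (g t)) \<le> ennreal (1 / (dist_bdry \<Omega> x - lr g 0 1))"
      by (rule ennreal_leI)
  qed
  then show ?thesis by simp
qed

lemma li_ge_Ioc:
  assumes "adm \<Omega> x y g"
  shows "(\<integral>\<^sup>+t. (ennreal (1 / dist_bdry \<Omega> (g t)) * indicator {0..1} t) * indicator {0<..1} t
      \<partial>interval_measure (arclength_fun g)) \<le> line_integral (\<lambda>z. ennreal (1 / dist_bdry \<Omega> z)) g"
  unfolding line_integral_def by (intro nn_integral_mono) (auto simp: indicator_def)

lemma ChainF:
  assumes "adm \<Omega> x y g" "x \<in> \<Omega>"
    and "line_integral (\<lambda>z. ennreal (1 / dist_bdry \<Omega> z)) g < ennreal (real n / 2)"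
  shows "lr g 0 1 < (2 ^ n - 1) * dist_bdry \<Omega> x"
proof (rule ccontr)
  assume "\<not> ?thesis"
  then have A: "(2 ^ n - 1) * dist_bdry \<Omega> x \<le> arclength_fun g 1 - arclength_fun g 0"
    by (simp add: arc_1 arclength_0)
  have r: "rectifiable g" using adm_rect[OF assms(1)] .
  have pg: "continuous_on {0..1} g" using r by (simp add: rectifiable_def path_def)
  have "ennreal (real n / 2) \<le> (\<integral>\<^sup>+t. (ennreal (1 / dist_bdry \<Omega> (g t)) * indicator {0..1} t) * indicator {0<..1} t
      \<partial>interval_measure (arclength_fun g))"
  proof (rule chain_fwd[OF arc_mono[OF r] arclength_cont[OF r] meas_ind[OF pg wf_meas] d_pos[OF assms(2)] _ A])
    fix t assume t: "t \<in> {0<..(1::real)}"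
    then have t': "t \<in> {0..1}" by auto
    have "dist_bdry \<Omega> (g t) \<le> dist_bdry \<Omega> x + arclength_fun g t - arclength_fun g 0"
      using d_along(1)[OF assms(1) t'] by (simp add: arclength_0)
    then have "1 / (dist_bdry \<Omega> x + arclength_fun g t - arclength_fun g 0) \<le> 1 / dist_bdry \<Omega> (g t)"
      using d_along(4)[OF assms(1) t'] by (intro divide_left_mono) auto
    then show "ennreal (1 / (dist_bdry \<Omega> x + arclength_fun g t - arclength_fun g 0)) \<le>
      ennreal (1 / dist_bdry \<Omega> (g t)) * indicator {0..1} t"
      using t' by (simp add: ennreal_leI)
  qed simp
  also have "\<dots> \<le> line_integral (\<lambda>z. ennreal (1 / dist_bdry \<Omega> z)) g" by (rule li_ge_Ioc[OF assms(1)])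
  finally show False using assms(3) by simp
qed

lemma ChainB:
  assumes "adm \<Omega> x y g" "y \<in> \<Omega>"
    and "line_integral (\<lambda>z. ennreal (1 / dist_bdry \<Omega> z)) g < ennreal (real n / 2)"
  shows "lr g 0 1 < (2 ^ n - 1) * dist_bdry \<Omega> y"
proof (rule ccontr)
  assume "\<not> ?thesis"
  then have A: "(2 ^ n - 1) * dist_bdry \<Omega> y \<le> arclength_fun g 1 - arclength_fun g 0"
    by (simp add: arc_1 arclength_0)
  have r: "rectifiable g" using adm_rect[OF assms(1)] .
  have pg: "continuous_on {0..1} g" using r by (simp add: rectifiable_def path_def)
  have "ennreal (real n / 2) \<le> (\<integral>\<^sup>+t. (ennreal (1 / dist_bdry \<Omega> (g t)) * indicator {0..1} t) * indicator {0<..1} t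
      \<partial>interval_measure (arclength_fun g))"
  proof (rule chain_bwd[OF arc_mono[OF r] arclength_cont[OF r] meas_ind[OF pg wf_meas] d_pos[OF assms(2)] _ A])
    fix t assume t: "t \<in> {0<..(1::real)}"
    then have t': "t \<in> {0..1}" by auto
    have "dist_bdry \<Omega> (g t) \<le> dist_bdry \<Omega> y + arclength_fun g 1 - arclength_fun g t"
      using d_along(3)[OF assms(1) t'] by (simp add: arc_1)
    then have "1 / (dist_bdry \<Omega> y + arclength_fun g 1 - arclength_fun g t) \<le> 1 / dist_bdry \<Omega> (g t)"
      using d_along(4)[OF assms(1) t'] by (intro divide_left_mono) auto
    then show "ennreal (1 / (dist_bdry \<Omega> y + arclength_fun g 1 - arclength_fun g t)) \<le>
      ennreal (1 / dist_bdry \<Omega> (g t)) * indicator {0..1} t"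
      using t' by (simp add: ennreal_leI)
  qed simp
  also have "\<dots> \<le> line_integral (\<lambda>z. ennreal (1 / dist_bdry \<Omega> z)) g" by (rule li_ge_Ioc[OF assms(1)])
  finally show False using assms(3) by simp
qed

end





context qhs begin

abbreviation "LI \<equiv> line_integral (\<lambda>z. ennreal (1 / dist_bdry \<Omega> z))"

lemma qh_tri:
  assumes "adm \<Omega> x y g" "adm \<Omega> y z h"
  shows "qh_dist \<Omega> x z \<le> LI g + LI h"
proof -
  have "qh_dist \<Omega> x z \<le> LI (g +++ h)" by (rule qh_le[OF adm_join[OF assms]])
  also have "\<dots> \<le> LI g + LI h"
    by (rule li_join[OF adm_rect[OF assms(1)] adm_rect[OF assms(2)] _ wf_meas]) (use assms in \<open>simp add: adm_def\<close>)
  finally show ?thesis .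
qed

lemma qh_ball_sub: "qh_ball \<Omega> x r \<subseteq> \<Omega>" by (auto simp: qh_ball_def)

lemma qh_ball_mono: "r \<le> s \<Longrightarrow> qh_ball \<Omega> x r \<subseteq> qh_ball \<Omega> x s"
  by (auto simp: qh_ball_def intro: less_le_trans ennreal_leI)

lemma L_pos: "0 < L" using L_ge1 by simp

lemma near_small:
  assumes y: "y \<in> \<Omega>" and "0 < \<delta>"
  shows "\<exists>\<rho>>0. \<forall>z\<in>\<Omega>. dist y z < \<rho> \<longrightarrow> (\<exists>h. adm \<Omega> y z h \<and> LI h < ennreal \<delta>)"
proof -
  define dy where "dy = dist_bdry \<Omega> y"
  have dy: "0 < dy" using d_pos[OF y] by (simp add: dy_def)
  define \<rho> where "\<rho> = min (dy / (2 * L)) (\<delta> * dy / (4 * L))"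
  have \<rho>: "0 < \<rho>" using dy L_pos \<open>0 < \<delta>\<close> by (simp add: \<rho>_def)
  have L\<rho>1: "L * \<rho> \<le> dy / 2" using L_pos by (simp add: \<rho>_def min_def field_simps)
  have L\<rho>2: "L * \<rho> \<le> \<delta> * dy / 4" using L_pos by (simp add: \<rho>_def min_def field_simps)
  show ?thesis
  proof (intro exI[of _ \<rho>] conjI ballI impI \<rho>)
    fix z assume z: "z \<in> \<Omega>" "dist y z < \<rho>"
    obtain h where h: "adm \<Omega> y z h" "lr h 0 1 \<le> L * dist y z" using qc_curve[OF y z(1)] by blast
    define l where "l = lr h 0 1"
    have l0: "0 \<le> l" by (simp add: l_def lr_nonneg)
    have "L * dist y z < L * \<rho>" using z(2) L_pos by simp
    then have l1: "l < dy / 2" "l < \<delta> * dy / 4" using h(2) L\<rho>1 L\<rho>2 by (auto simp: l_def)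
    have "LI h \<le> ennreal (l / (dy - l))"
      using UB[OF h(1) y] l1 dy by (simp add: l_def dy_def)
    also have "l / (dy - l) < \<delta>"
    proof -
      have "\<delta> * (dy / 2) \<le> \<delta> * (dy - l)" using l1 \<open>0 < \<delta>\<close> by (intro mult_left_mono) auto
      moreover have "\<delta> * (dy - l) = \<delta> * dy - \<delta> * l" "\<delta> * (dy / 2) = \<delta> * dy / 2"
        by (simp_all add: algebra_simps)
      moreover have "0 < \<delta> * dy" using \<open>0 < \<delta>\<close> dy by simp
      ultimately have "l < \<delta> * (dy - l)" using l1 by linarith
      moreover have pos: "0 < dy - l" using l1 dy by linarith
      ultimately show ?thesis unfolding pos_divide_less_eq[OF pos] by simp
    qed
    then have "ennreal (l / (dy - l)) < ennreal \<delta>" using l0 l1 \<open>0 < \<delta>\<close> by (intro ennreal_lessI) auto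
    finally show "\<exists>h. adm \<Omega> y z h \<and> LI h < ennreal \<delta>" using h(1) by blast
  qed
qed

lemma Omega_borel: "\<Omega> \<in> sets borel"
proof -
  obtain T where T: "open T" "\<Omega> = closure \<Omega> \<inter> T" using oc by (auto simp: openin_open)
  then show ?thesis by (metis borel_closed borel_open closed_closure sets.Int)
qed

lemma qh_ball_openin: "openin (top_of_set \<Omega>) (qh_ball \<Omega> x r)"
  unfolding openin_euclidean_subtopology_iff
proof (intro conjI ballI qh_ball_sub)
  fix y assume y: "y \<in> qh_ball \<Omega> x r"
  then have yO: "y \<in> \<Omega>" and q: "qh_dist \<Omega> x y < ennreal r" by (auto simp: qh_ball_def)
  obtain g where g: "adm \<Omega> x y g" "LI g < ennreal r" using qh_lt[OF q] by blast
  obtain i where i: "LI g = ennreal i" "0 \<le> i" using g(2)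
    by (cases "LI g" rule: ennreal_cases) auto
  have "i < r" using g(2) i by (simp add: ennreal_less_iff)
  then obtain \<rho> where \<rho>: "\<rho> > 0" "\<And>z. z \<in> \<Omega> \<Longrightarrow> dist y z < \<rho> \<Longrightarrow> \<exists>h. adm \<Omega> y z h \<and> LI h < ennreal (r - i)"
    using near_small[OF yO, of "r - i"] by auto
  show "\<exists>e>0. \<forall>x'\<in>\<Omega>. dist x' y < e \<longrightarrow> x' \<in> qh_ball \<Omega> x r"
  proof (intro exI[of _ \<rho>] conjI ballI impI \<rho>(1))
    fix z assume z: "z \<in> \<Omega>" "dist z y < \<rho>"
    then obtain h where h: "adm \<Omega> y z h" "LI h < ennreal (r - i)" using \<rho>(2)[of z] by (auto simp: dist_commute)
    have "qh_dist \<Omega> x z \<le> LI g + LI h" by (rule qh_tri[OF g(1) h(1)])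
    also have "\<dots> < ennreal i + ennreal (r - i)"
      unfolding i(1) using h(2) by (simp add: ennreal_add_left_cancel_less)
    also have "\<dots> = ennreal r" using i(2) \<open>i < r\<close> by (simp add: ennreal_plus[symmetric])
    finally show "z \<in> qh_ball \<Omega> x r" using z by (simp add: qh_ball_def)
  qed
qed

lemma qh_ball_meas: "qh_ball \<Omega> x r \<in> sets (restrict_space borel \<Omega>)"
proof -
  obtain T where T: "open T" "qh_ball \<Omega> x r = \<Omega> \<inter> T" using qh_ball_openin[of x r] by (auto simp: openin_open)
  have "qh_ball \<Omega> x r \<in> sets borel" using T Omega_borel by auto
  then show ?thesis using Omega_borel qh_ball_sub by (subst sets_restrict_space_iff) auto
qed

lemma dball_meas: "d_ball \<Omega> x r \<in> sets (restrict_space borel \<Omega>)"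
  using Omega_borel by (subst sets_restrict_space_iff) (auto simp: d_ball_def)

lemma lower_contain:
  assumes x: "x \<in> \<Omega>" and r: "0 < r" "r \<le> 1"
  shows "d_ball \<Omega> x (r * dist_bdry \<Omega> x / (2 * L)) \<subseteq> qh_ball \<Omega> x r"
proof
  fix y assume "y \<in> d_ball \<Omega> x (r * dist_bdry \<Omega> x / (2 * L))"
  then have y: "y \<in> \<Omega>" "dist x y < r * dist_bdry \<Omega> x / (2 * L)" by (auto simp: d_ball_def)
  define d where "d = dist_bdry \<Omega> x"
  have d: "0 < d" using d_pos[OF x] by (simp add: d_def)
  obtain h where h: "adm \<Omega> x y h" "lr h 0 1 \<le> L * dist x y" using qc_curve[OF x y(1)] by blast
  define l where "l = lr h 0 1"
  have l0: "0 \<le> l" by (simp add: l_def lr_nonneg)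
  have "L * dist x y < L * (r * d / (2 * L))" using y(2) L_pos by (intro mult_strict_left_mono) (auto simp: d_def)
  moreover have "L * (r * d / (2 * L)) = r * d / 2" using L_pos by simp
  ultimately have "l < r * d / 2" using h(2) by (simp add: l_def)
  moreover have "r * d / 2 \<le> d / 2" using r d by simp
  ultimately have l1: "l < r * d / 2" "l < d / 2" by auto
  have "qh_dist \<Omega> x y \<le> LI h" by (rule qh_le[OF h(1)])
  also have "LI h \<le> ennreal (l / (d - l))"
    using UB[OF h(1) x] l1 d by (simp add: l_def d_def)
  also have "l / (d - l) < r"
  proof -
    have "r * (d / 2) \<le> r * (d - l)" using l1 r by (intro mult_left_mono) auto
    then have "l < r * (d - l)" using l1 by (simp add: field_simps)
    moreover have pos: "0 < d - l" using l1 d by linarith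
    ultimately show ?thesis unfolding pos_divide_less_eq[OF pos] by simp
  qed
  then have "ennreal (l / (d - l)) < ennreal r" using l0 l1 by (intro ennreal_lessI) (auto simp: r)
  finally show "y \<in> qh_ball \<Omega> x r" using y by (simp add: qh_ball_def)
qed

lemma adm_len_dist: "adm \<Omega> x y g \<Longrightarrow> dist x y \<le> lr g 0 1"
  using lr_ge_dist[OF adm_rect, of \<Omega> x y g 0 1] by (simp add: adm_def pathstart_def pathfinish_def)

lemma upper_small:
  assumes x: "x \<in> \<Omega>" and s: "0 < s" "s \<le> 1/4" and y: "y \<in> qh_ball \<Omega> x s"
  shows "dist x y < 2 * s * dist_bdry \<Omega> x" "dist_bdry \<Omega> x / 2 \<le> dist_bdry \<Omega> y"
proof -
  define d where "d = dist_bdry \<Omega> x"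
  have d: "0 < d" using d_pos[OF x] by (simp add: d_def)
  have q: "qh_dist \<Omega> x y < ennreal s" using y by (simp add: qh_ball_def)
  obtain g where g: "adm \<Omega> x y g" "LI g < ennreal s" using qh_lt[OF q] by blast
  define l where "l = lr g 0 1"
  have l0: "0 \<le> l" by (simp add: l_def lr_nonneg)
  have "ennreal (l / (d + l)) < ennreal s" using LB_crude[OF g(1) x] g(2) by (simp add: l_def d_def)
  then have "l / (d + l) < s" using l0 d by (simp add: ennreal_less_iff)
  then have "l < s * (d + l)" using l0 d by (simp add: pos_divide_less_eq)
  moreover have "s * l \<le> (1/4) * l" using s l0 by (intro mult_right_mono) auto
  moreover have "s * (d + l) = s * d + s * l" by (simp add: algebra_simps)
  moreover have "0 < s * d" using s d by simp
  ultimately have "l < 2 * (s * d)" by linarith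
  then have "l < 2 * s * d" by (simp add: mult.assoc)
  have "dist x y \<le> l" using adm_len_dist[OF g(1)] by (simp add: l_def)
  show "dist x y < 2 * s * dist_bdry \<Omega> x" using \<open>l < 2 * s * d\<close> \<open>dist x y \<le> l\<close> by (simp add: d_def)
  have "d \<le> dist_bdry \<Omega> y + dist y x" using d_lip[of x y] by (simp add: d_def)
  moreover have "2 * s * d \<le> d / 2" using s d by simp
  ultimately show "dist_bdry \<Omega> x / 2 \<le> dist_bdry \<Omega> y"
    using \<open>l < 2 * s * d\<close> \<open>dist x y \<le> l\<close> by (simp add: d_def dist_commute)
qed

lemma upper_big:
  assumes x: "x \<in> \<Omega>" and R: "0 < R"
  shows "\<forall>y\<in>qh_ball \<Omega> x R. dist x y < 2 ^ nat \<lceil>2 * R\<rceil> * dist_bdry \<Omega> x \<and>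
      dist_bdry \<Omega> x / 2 ^ nat \<lceil>2 * R\<rceil> < dist_bdry \<Omega> y"
proof (intro ballI conjI)
  define n where "n = nat \<lceil>2 * R\<rceil>"
  define d where "d = dist_bdry \<Omega> x"
  have d: "0 < d" using d_pos[OF x] by (simp add: d_def)
  have Rn: "R \<le> real n / 2" using R by (simp add: n_def) linarith
  fix y assume y: "y \<in> qh_ball \<Omega> x R"
  then have yO: "y \<in> \<Omega>" by (simp add: qh_ball_def)
  have q: "qh_dist \<Omega> x y < ennreal R" using y by (simp add: qh_ball_def)
  obtain g where g: "adm \<Omega> x y g" "LI g < ennreal R" using qh_lt[OF q] by blast
  have g2: "LI g < ennreal (real n / 2)" using g(2) Rn by (meson ennreal_leI less_le_trans)
  have l1: "lr g 0 1 < (2 ^ n - 1) * d" using ChainF[OF g(1) x g2] by (simp add: d_def)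
  have l2: "lr g 0 1 < (2 ^ n - 1) * dist_bdry \<Omega> y" using ChainB[OF g(1) yO g2] .
  have dxy: "dist x y \<le> lr g 0 1" by (rule adm_len_dist[OF g(1)])
  show "dist x y < 2 ^ nat \<lceil>2 * R\<rceil> * dist_bdry \<Omega> x"
    using l1 dxy d by (simp add: n_def d_def algebra_simps)
  have "d \<le> dist_bdry \<Omega> y + dist y x" using d_lip[of x y] by (simp add: d_def)
  then have "d < 2 ^ n * dist_bdry \<Omega> y" using l2 dxy by (simp add: dist_commute algebra_simps)
  then show "dist_bdry \<Omega> x / 2 ^ nat \<lceil>2 * R\<rceil> < dist_bdry \<Omega> y"
    by (simp add: n_def d_def pos_divide_less_eq mult.commute)
qed

end





lemma pow_ceil_log: "0 < X \<Longrightarrow> X \<le> (2::real) ^ nat \<lceil>log 2 X\<rceil>"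
proof -
  assume X: "0 < X"
  have "log 2 X \<le> real (nat \<lceil>log 2 X\<rceil>)" by linarith
  then have "2 powr (log 2 X) \<le> 2 powr real (nat \<lceil>log 2 X\<rceil>)" by (rule powr_mono) simp
  then show ?thesis using X by (simp add: powr_realpow)
qed

locale qhm = qhs \<Omega> L for \<Omega> :: "'a::complete_space set" and L :: real +
  fixes \<mu> :: "'a measure" and C :: real and \<alpha> :: real
  assumes borel: "sets \<mu> = sets (restrict_space borel \<Omega>)"
    and doubling: "doubling_global \<mu> \<Omega> (d_ball \<Omega>) C"
    and alpha: "\<alpha> > 0"
begin

abbreviation "\<nu> \<equiv> weighted_measure \<Omega> \<mu> \<alpha>"

lemma w_meas: "(\<lambda>z. ennreal (dist_bdry \<Omega> z powr (- \<alpha>))) \<in> borel_measurable \<mu>"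
proof -
  have "dist_bdry \<Omega> \<in> borel_measurable borel" using d_cont by (rule borel_measurable_continuous_onI)
  then have "(\<lambda>z. ennreal (dist_bdry \<Omega> z powr (- \<alpha>))) \<in> borel_measurable borel" by measurable
  then have "(\<lambda>z. ennreal (dist_bdry \<Omega> z powr (- \<alpha>))) \<in> borel_measurable (restrict_space borel \<Omega>)"
    by (rule measurable_restrict_space1)
  then show ?thesis unfolding measurable_cong_sets[OF borel refl, where N=borel] .
qed

lemma mset: "S \<in> sets (restrict_space borel \<Omega>) \<Longrightarrow> S \<in> sets \<mu>" using borel by simp

lemma nu_eq: "S \<in> sets \<mu> \<Longrightarrow> emeasure \<nu> S = (\<integral>\<^sup>+z. ennreal (dist_bdry \<Omega> z powr (- \<alpha>)) * indicator S z \<partial>\<mu>)"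
  unfolding weighted_measure_def by (rule emeasure_density[OF w_meas])

lemma nu_upper:
  assumes S: "S \<in> sets \<mu>" and m: "0 < m" and b: "\<And>z. z \<in> S \<Longrightarrow> m \<le> dist_bdry \<Omega> z"
  shows "emeasure \<nu> S \<le> ennreal (m powr (- \<alpha>)) * emeasure \<mu> S"
proof -
  have "emeasure \<nu> S \<le> (\<integral>\<^sup>+z. ennreal (m powr (- \<alpha>)) * indicator S z \<partial>\<mu>)"
    unfolding nu_eq[OF S]
  proof (intro nn_integral_mono)
    fix z show "ennreal (dist_bdry \<Omega> z powr - \<alpha>) * indicator S z \<le> ennreal (m powr - \<alpha>) * indicator S z"
    proof (cases "z \<in> S")
      case True
      then have "dist_bdry \<Omega> z powr - \<alpha> \<le> m powr - \<alpha>" using b[OF True] m alpha by (intro powr_mono2') auto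
      then show ?thesis using True by (simp add: ennreal_leI)
    qed simp
  qed
  also have "\<dots> = ennreal (m powr (- \<alpha>)) * emeasure \<mu> S" by (rule nn_integral_cmult_indicator[OF S])
  finally show ?thesis .
qed

lemma nu_lower:
  assumes S: "S \<in> sets \<mu>" "S \<subseteq> \<Omega>" and b: "\<And>z. z \<in> S \<Longrightarrow> dist_bdry \<Omega> z \<le> M"
  shows "ennreal (M powr (- \<alpha>)) * emeasure \<mu> S \<le> emeasure \<nu> S"
proof -
  have "ennreal (M powr (- \<alpha>)) * emeasure \<mu> S = (\<integral>\<^sup>+z. ennreal (M powr (- \<alpha>)) * indicator S z \<partial>\<mu>)"
    by (rule nn_integral_cmult_indicator[OF S(1), symmetric])
  also have "\<dots> \<le> emeasure \<nu> S"
    unfolding nu_eq[OF S(1)]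
  proof (intro nn_integral_mono)
    fix z show "ennreal (M powr - \<alpha>) * indicator S z \<le> ennreal (dist_bdry \<Omega> z powr - \<alpha>) * indicator S z"
    proof (cases "z \<in> S")
      case True
      then have "M powr - \<alpha> \<le> dist_bdry \<Omega> z powr - \<alpha>" using b[OF True] d_pos[of z] S(2) alpha
        by (intro powr_mono2') auto
      then show ?thesis using True by (simp add: ennreal_leI)
    qed simp
  qed
  finally show ?thesis .
qed

lemma dball_fin: "x \<in> \<Omega> \<Longrightarrow> 0 < \<rho> \<Longrightarrow> emeasure \<mu> (d_ball \<Omega> x \<rho>) < \<infinity>"
  using doubling by (auto simp: doubling_global_def)

lemma dball_pos: "x \<in> \<Omega> \<Longrightarrow> 0 < \<rho> \<Longrightarrow> 0 < emeasure \<mu> (d_ball \<Omega> x \<rho>)"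
  using doubling[unfolded doubling_global_def, rule_format, of x "\<rho> / 2"] by auto

lemma dball_dbl: "x \<in> \<Omega> \<Longrightarrow> 0 < \<rho> \<Longrightarrow> emeasure \<mu> (d_ball \<Omega> x (2 * \<rho>)) \<le> ennreal C * emeasure \<mu> (d_ball \<Omega> x \<rho>)"
  using doubling by (auto simp: doubling_global_def)

lemma C_pos: "0 < C"
proof (rule ccontr)
  assume "\<not> 0 < C"
  then have C0: "ennreal C = 0" by (simp add: ennreal_neg)
  obtain x where x: "x \<in> \<Omega>" using two_points by blast
  have "0 < emeasure \<mu> (d_ball \<Omega> x (2 * 1))" using dball_pos[OF x] by simp
  also have "\<dots> \<le> ennreal C * emeasure \<mu> (d_ball \<Omega> x 1)" using dball_dbl[OF x, of 1] by simp
  finally show False using C0 by simp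
qed

lemma dball_mu: "d_ball \<Omega> x r \<in> sets \<mu>" by (rule mset[OF dball_meas])

lemma dball_mono: "a \<le> b \<Longrightarrow> emeasure \<mu> (d_ball \<Omega> x a) \<le> emeasure \<mu> (d_ball \<Omega> x b)"
  by (rule emeasure_mono[OF _ dball_mu]) (auto simp: d_ball_def)

lemma dball_iter:
  assumes x: "x \<in> \<Omega>" and \<rho>: "0 < \<rho>"
  shows "emeasure \<mu> (d_ball \<Omega> x (2 ^ k * \<rho>)) \<le> ennreal (C ^ k) * emeasure \<mu> (d_ball \<Omega> x \<rho>)"
proof (induction k)
  case 0 then show ?case by simp
next
  case (Suc k)
  have "emeasure \<mu> (d_ball \<Omega> x (2 ^ Suc k * \<rho>)) = emeasure \<mu> (d_ball \<Omega> x (2 * (2 ^ k * \<rho>)))"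
    by (simp add: mult.assoc)
  also have "\<dots> \<le> ennreal C * emeasure \<mu> (d_ball \<Omega> x (2 ^ k * \<rho>))" using dball_dbl[OF x] \<rho> by simp
  also have "\<dots> \<le> ennreal C * (ennreal (C ^ k) * emeasure \<mu> (d_ball \<Omega> x \<rho>))"
    by (intro mult_left_mono Suc.IH) simp
  also have "\<dots> = ennreal (C ^ Suc k) * emeasure \<mu> (d_ball \<Omega> x \<rho>)"
    using C_pos by (simp add: ennreal_mult mult.assoc)
  finally show ?case .
qed

lemma nu_ball_lower:
  assumes x: "x \<in> \<Omega>" and \<rho>: "0 < \<rho>" "\<rho> \<le> dist_bdry \<Omega> x"
  shows "ennreal ((2 * dist_bdry \<Omega> x) powr (- \<alpha>)) * emeasure \<mu> (d_ball \<Omega> x \<rho>) \<le> emeasure \<nu> (d_ball \<Omega> x \<rho>)"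
proof (rule nu_lower)
  show "d_ball \<Omega> x \<rho> \<in> sets \<mu>" by (rule mset[OF dball_meas])
  show "d_ball \<Omega> x \<rho> \<subseteq> \<Omega>" by (auto simp: d_ball_def)
  fix z assume "z \<in> d_ball \<Omega> x \<rho>"
  then have "dist x z < \<rho>" by (simp add: d_ball_def)
  then show "dist_bdry \<Omega> z \<le> 2 * dist_bdry \<Omega> x" using d_lip[of z x] \<rho> by simp
qed

lemma combine:
  assumes x: "x \<in> \<Omega>" and S: "S \<in> sets \<mu>" "S \<subseteq> \<Omega>" and T: "T \<in> sets \<mu>" "d_ball \<Omega> x \<rho> \<subseteq> T"
    and \<rho>: "0 < \<rho>" "\<rho> \<le> dist_bdry \<Omega> x" and m: "0 < m"
    and b: "\<And>y. y \<in> S \<Longrightarrow> m \<le> dist_bdry \<Omega> y \<and> dist x y < D"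
    and k: "D \<le> 2 ^ k * \<rho>"
  shows "emeasure \<nu> S \<le> ennreal (m powr (- \<alpha>) * C ^ k * (2 * dist_bdry \<Omega> x) powr \<alpha>) * emeasure \<nu> T"
proof -
  define d where "d = dist_bdry \<Omega> x"
  have d: "0 < d" using d_pos[OF x] by (simp add: d_def)
  have "emeasure \<nu> S \<le> ennreal (m powr (- \<alpha>)) * emeasure \<mu> S"
    using nu_upper[OF S(1) m] b by blast
  also have "emeasure \<mu> S \<le> emeasure \<mu> (d_ball \<Omega> x D)"
    by (rule emeasure_mono[OF _ dball_mu]) (use b S in \<open>auto simp: d_ball_def\<close>)
  also have "\<dots> \<le> emeasure \<mu> (d_ball \<Omega> x (2 ^ k * \<rho>))" by (rule dball_mono[OF k])
  also have "\<dots> \<le> ennreal (C ^ k) * emeasure \<mu> (d_ball \<Omega> x \<rho>)" by (rule dball_iter[OF x \<rho>(1)])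
  also have "emeasure \<mu> (d_ball \<Omega> x \<rho>) \<le> ennreal ((2 * d) powr \<alpha>) * emeasure \<nu> T"
  proof -
    have "emeasure \<mu> (d_ball \<Omega> x \<rho>) = ennreal ((2 * d) powr \<alpha>) * (ennreal ((2 * d) powr (- \<alpha>)) * emeasure \<mu> (d_ball \<Omega> x \<rho>))"
    proof -
      have "(2 * d) powr \<alpha> * (2 * d) powr (- \<alpha>) = 1" using d by (simp add: powr_minus_divide)
      then have "ennreal ((2 * d) powr \<alpha>) * ennreal ((2 * d) powr (- \<alpha>)) = 1"
        by (simp add: ennreal_mult[symmetric])
      then show ?thesis by (simp add: mult.assoc[symmetric])
    qed
    also have "\<dots> \<le> ennreal ((2 * d) powr \<alpha>) * emeasure \<nu> (d_ball \<Omega> x \<rho>)"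
      by (intro mult_left_mono nu_ball_lower[OF x \<rho>(1), unfolded d_def[symmetric]]) (use \<rho> in \<open>auto simp: d_def\<close>)
    also have "\<dots> \<le> ennreal ((2 * d) powr \<alpha>) * emeasure \<nu> T"
      by (intro mult_left_mono emeasure_mono T(2)) (use T(1) in \<open>auto simp: weighted_measure_def\<close>)
    finally show ?thesis .
  qed
  finally have "emeasure \<nu> S \<le> ennreal (m powr (- \<alpha>)) * (ennreal (C ^ k) * (ennreal ((2 * d) powr \<alpha>) * emeasure \<nu> T))"
    by (simp add: mult_left_mono)
  also have "\<dots> = ennreal (m powr (- \<alpha>) * C ^ k * (2 * d) powr \<alpha>) * emeasure \<nu> T"
    using C_pos d by (simp add: ennreal_mult mult.assoc)
  finally show ?thesis by (simp add: d_def)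
qed

end





lemma powr_ratio: "0 < a \<Longrightarrow> 0 < b \<Longrightarrow> a powr (- c) * b powr c = (b / a) powr (c::real)"
  by (simp add: powr_minus_divide powr_divide)

context qhm begin

lemma qb_mu: "qh_ball \<Omega> x r \<in> sets \<mu>" by (rule mset[OF qh_ball_meas])

lemma nu_fin:
  assumes x: "x \<in> \<Omega>" and R: "0 < R"
  shows "emeasure \<nu> (qh_ball \<Omega> x R) < \<infinity>"
proof -
  define n where "n = nat \<lceil>2 * R\<rceil>"
  define d where "d = dist_bdry \<Omega> x"
  have d: "0 < d" using d_pos[OF x] by (simp add: d_def)
  have b: "\<And>y. y \<in> qh_ball \<Omega> x R \<Longrightarrow> dist x y < 2 ^ n * d \<and> d / 2 ^ n < dist_bdry \<Omega> y"
    using upper_big[OF x R] by (simp add: n_def d_def)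
  have A: "emeasure \<nu> (qh_ball \<Omega> x R) \<le> ennreal ((d / 2 ^ n) powr (- \<alpha>)) * emeasure \<mu> (qh_ball \<Omega> x R)"
    by (rule nu_upper[OF qb_mu]) (use d b in \<open>auto intro: less_imp_le\<close>)
  have B: "emeasure \<mu> (qh_ball \<Omega> x R) \<le> emeasure \<mu> (d_ball \<Omega> x (2 ^ n * d))"
    by (rule emeasure_mono[OF _ dball_mu]) (use b qh_ball_sub in \<open>auto simp: d_ball_def\<close>)
  have "emeasure \<mu> (d_ball \<Omega> x (2 ^ n * d)) < \<infinity>" by (rule dball_fin[OF x]) (use d in simp)
  then have "emeasure \<mu> (qh_ball \<Omega> x R) < \<infinity>" using B by simp
  then have "ennreal ((d / 2 ^ n) powr (- \<alpha>)) * emeasure \<mu> (qh_ball \<Omega> x R) < \<infinity>"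
    by (simp add: ennreal_mult_less_top)
  then show ?thesis using A by simp
qed

lemma nu_pos:
  assumes x: "x \<in> \<Omega>" and r: "0 < r"
  shows "0 < emeasure \<nu> (qh_ball \<Omega> x r)"
proof -
  define r' where "r' = min r 1"
  define d where "d = dist_bdry \<Omega> x"
  have d: "0 < d" using d_pos[OF x] by (simp add: d_def)
  define \<rho> where "\<rho> = r' * d / (2 * L)"
  have r': "0 < r'" "r' \<le> 1" "r' \<le> r" using r by (auto simp: r'_def)
  have \<rho>: "0 < \<rho>" using r' d L_pos by (simp add: \<rho>_def)
  have "\<rho> \<le> r' * d / 2" unfolding \<rho>_def using L_ge1 r' d by (intro divide_left_mono) auto
  also have "\<dots> \<le> d" using r' d by simp
  finally have \<rho>d: "\<rho> \<le> d" .
  have "0 < ennreal ((2 * d) powr (- \<alpha>)) * emeasure \<mu> (d_ball \<Omega> x \<rho>)"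
    using dball_pos[OF x \<rho>] d by (simp add: ennreal_zero_less_mult_iff)
  also have "\<dots> \<le> emeasure \<nu> (d_ball \<Omega> x \<rho>)"
    using nu_ball_lower[OF x \<rho>] \<rho>d by (simp add: d_def)
  also have "\<dots> \<le> emeasure \<nu> (qh_ball \<Omega> x r)"
  proof (rule emeasure_mono)
    have "d_ball \<Omega> x \<rho> \<subseteq> qh_ball \<Omega> x r'" using lower_contain[OF x r'(1,2)] by (simp add: \<rho>_def d_def)
    also have "\<dots> \<subseteq> qh_ball \<Omega> x r" by (rule qh_ball_mono[OF r'(3)])
    finally show "d_ball \<Omega> x \<rho> \<subseteq> qh_ball \<Omega> x r" .
    show "qh_ball \<Omega> x r \<in> sets \<nu>" using qb_mu by (simp add: weighted_measure_def)
  qed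
  finally show ?thesis .
qed

lemma part1:
  assumes x: "x \<in> \<Omega>" and r: "0 < r" "r \<le> 1/8"
  shows "emeasure \<nu> (qh_ball \<Omega> x (2 * r)) \<le> ennreal (4 powr \<alpha> * C ^ nat \<lceil>log 2 (8 * L)\<rceil>) * emeasure \<nu> (qh_ball \<Omega> x r)"
proof -
  define k where "k = nat \<lceil>log 2 (8 * L)\<rceil>"
  define d where "d = dist_bdry \<Omega> x"
  have d: "0 < d" using d_pos[OF x] by (simp add: d_def)
  define \<rho> where "\<rho> = r * d / (2 * L)"
  have \<rho>: "0 < \<rho>" using r d L_pos by (simp add: \<rho>_def)
  have "\<rho> \<le> r * d / 2" unfolding \<rho>_def using L_ge1 r d by (intro divide_left_mono) auto
  also have "\<dots> \<le> d" using r d by simp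
  finally have \<rho>d: "\<rho> \<le> d" .
  have k8: "8 * L \<le> 2 ^ k" unfolding k_def by (rule pow_ceil_log) (use L_pos in simp)
  have "4 * r * d = 8 * L * \<rho>" using L_pos by (simp add: \<rho>_def)
  also have "\<dots> \<le> 2 ^ k * \<rho>" using k8 \<rho> by (intro mult_right_mono) auto
  finally have kk: "4 * r * d \<le> 2 ^ k * \<rho>" .
  have "emeasure \<nu> (qh_ball \<Omega> x (2 * r)) \<le>
     ennreal ((d / 2) powr (- \<alpha>) * C ^ k * (2 * dist_bdry \<Omega> x) powr \<alpha>) * emeasure \<nu> (qh_ball \<Omega> x r)"
  proof (rule combine[OF x qb_mu qh_ball_sub qb_mu _ \<rho> _ _ _ kk])
    show "d_ball \<Omega> x \<rho> \<subseteq> qh_ball \<Omega> x r" using lower_contain[OF x r(1)] r(2) by (simp add: \<rho>_def d_def)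
    show "\<rho> \<le> dist_bdry \<Omega> x" using \<rho>d by (simp add: d_def)
    show "0 < d / 2" using d by simp
    fix y assume y: "y \<in> qh_ball \<Omega> x (2 * r)"
    have "dist x y < 2 * (2 * r) * d" "d / 2 \<le> dist_bdry \<Omega> y"
      using upper_small[OF x _ _ y] r by (auto simp: d_def)
    then show "d / 2 \<le> dist_bdry \<Omega> y \<and> dist x y < 4 * r * d" by simp
  qed
  also have "(d / 2) powr (- \<alpha>) * C ^ k * (2 * dist_bdry \<Omega> x) powr \<alpha> = 4 powr \<alpha> * C ^ k"
  proof -
    have "(d / 2) powr (- \<alpha>) * (2 * d) powr \<alpha> = ((2 * d) / (d / 2)) powr \<alpha>" using d by (intro powr_ratio) auto
    also have "(2 * d) / (d / 2) = 4" using d by simp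
    finally show ?thesis by (simp add: d_def[symmetric] algebra_simps)
  qed
  finally show ?thesis by (simp add: k_def)
qed

lemma part2:
  assumes R1: "0 < R1"
  shows "\<exists>K. \<forall>x\<in>\<Omega>. \<forall>r. 1/8 < r \<and> r \<le> R1 \<longrightarrow>
     emeasure \<nu> (qh_ball \<Omega> x (2 * r)) \<le> ennreal K * emeasure \<nu> (qh_ball \<Omega> x r)"
proof -
  define R where "R = 2 * R1"
  define n where "n = nat \<lceil>2 * R\<rceil>"
  define k where "k = nat \<lceil>log 2 (16 * L * 2 ^ n)\<rceil>"
  have k16: "16 * L * 2 ^ n \<le> 2 ^ k" unfolding k_def by (rule pow_ceil_log) (use L_pos in simp)
  show ?thesis
  proof (intro exI[of _ "(2 * 2 ^ n) powr \<alpha> * C ^ k"] ballI allI impI)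
    fix x r assume x: "x \<in> \<Omega>" and r: "1/8 < r \<and> r \<le> R1"
    define d where "d = dist_bdry \<Omega> x"
    have d: "0 < d" using d_pos[OF x] by (simp add: d_def)
    define \<rho> where "\<rho> = d / (16 * L)"
    have \<rho>: "0 < \<rho>" using d L_pos by (simp add: \<rho>_def)
    have "\<rho> \<le> d / 16" unfolding \<rho>_def using L_ge1 d by (intro divide_left_mono) auto
    then have \<rho>d: "\<rho> \<le> d" using d by simp
    have "2 ^ n * d = 16 * L * 2 ^ n * \<rho>" using L_pos by (simp add: \<rho>_def)
    also have "\<dots> \<le> 2 ^ k * \<rho>" using k16 \<rho> by (intro mult_right_mono) auto
    finally have kk: "2 ^ n * d \<le> 2 ^ k * \<rho>" .
    have R: "0 < R" using R1 by (simp add: R_def)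
    have "emeasure \<nu> (qh_ball \<Omega> x (2 * r)) \<le>
       ennreal ((d / 2 ^ n) powr (- \<alpha>) * C ^ k * (2 * dist_bdry \<Omega> x) powr \<alpha>) * emeasure \<nu> (qh_ball \<Omega> x r)"
    proof (rule combine[OF x qb_mu qh_ball_sub qb_mu _ \<rho> _ _ _ kk])
      have "d_ball \<Omega> x \<rho> \<subseteq> qh_ball \<Omega> x (1/8)"
        using lower_contain[OF x, of "1/8"] by (simp add: \<rho>_def d_def)
      also have "\<dots> \<subseteq> qh_ball \<Omega> x r" by (rule qh_ball_mono) (use r in simp)
      finally show "d_ball \<Omega> x \<rho> \<subseteq> qh_ball \<Omega> x r" .
      show "\<rho> \<le> dist_bdry \<Omega> x" using \<rho>d by (simp add: d_def)
      show "0 < d / 2 ^ n" using d by simp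
      fix y assume y: "y \<in> qh_ball \<Omega> x (2 * r)"
      then have "y \<in> qh_ball \<Omega> x R" using qh_ball_mono[of "2 * r" R x] r by (auto simp: R_def)
      then show "d / 2 ^ n \<le> dist_bdry \<Omega> y \<and> dist x y < 2 ^ n * d"
        using upper_big[OF x R] by (auto simp: n_def d_def)
    qed
    also have "(d / 2 ^ n) powr (- \<alpha>) * C ^ k * (2 * dist_bdry \<Omega> x) powr \<alpha> = (2 * 2 ^ n) powr \<alpha> * C ^ k"
    proof -
      have "(d / 2 ^ n) powr (- \<alpha>) * (2 * d) powr \<alpha> = ((2 * d) / (d / 2 ^ n)) powr \<alpha>" using d by (intro powr_ratio) auto
      also have "(2 * d) / (d / 2 ^ n) = 2 * 2 ^ n" using d by simp
      finally show ?thesis by (simp add: d_def[symmetric] algebra_simps)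
    qed
    finally show "emeasure \<nu> (qh_ball \<Omega> x (2 * r)) \<le> ennreal ((2 * 2 ^ n) powr \<alpha> * C ^ k) * emeasure \<nu> (qh_ball \<Omega> x r)" .
  qed
qed

end





theorem proposition7p3:
  fixes \<Omega> :: "'a::complete_space set"
    and L C\<^sub>\<mu> \<alpha> :: real
    and \<mu> :: "'a measure"
  assumes qc: "quasiconvex L \<Omega>"
    and noncomplete: "\<not> complete \<Omega>"
    and open_in_completion: "openin (top_of_set (closure \<Omega>)) \<Omega>"
    and borel: "sets \<mu> = sets (restrict_space borel \<Omega>)"
    and doubling: "doubling_global \<mu> \<Omega> (d_ball \<Omega>) C\<^sub>\<mu>"
    and alpha: "\<alpha> > 0"
  shows "doubling_upto (weighted_measure \<Omega> \<mu> \<alpha>) \<Omega> (qh_ball \<Omega>) (1/8)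
           (4 powr \<alpha> * C\<^sub>\<mu> ^ nat \<lceil>log 2 (8 * L)\<rceil>)
       \<and> (\<forall>R\<^sub>1 > 0. \<exists>C. doubling_upto (weighted_measure \<Omega> \<mu> \<alpha>) \<Omega> (qh_ball \<Omega>) R\<^sub>1 C)"
proof -
  interpret qhm \<Omega> L \<mu> C\<^sub>\<mu> \<alpha>
    by unfold_locales (use assms in auto)
  define c1 where "c1 = 4 powr \<alpha> * C\<^sub>\<mu> ^ nat \<lceil>log 2 (8 * L)\<rceil>"
  have P1: "0 < emeasure \<nu> (qh_ball \<Omega> x (2 * r)) \<and>
        emeasure \<nu> (qh_ball \<Omega> x (2 * r)) \<le> ennreal c1 * emeasure \<nu> (qh_ball \<Omega> x r) \<and>
        emeasure \<nu> (qh_ball \<Omega> x r) < \<infinity>"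
    if x: "x \<in> \<Omega>" and r: "0 < r" "r \<le> 1/8" for x r
    using nu_pos[OF x, of "2 * r"] part1[OF x r] nu_fin[OF x r(1)] r by (simp add: c1_def)
  show ?thesis
  proof (intro conjI allI impI)
    show "doubling_upto (weighted_measure \<Omega> \<mu> \<alpha>) \<Omega> (qh_ball \<Omega>) (1/8)
           (4 powr \<alpha> * C\<^sub>\<mu> ^ nat \<lceil>log 2 (8 * L)\<rceil>)"
      unfolding doubling_upto_def c1_def[symmetric] using P1 by blast
    fix R1 :: real assume R1: "R1 > 0"
    obtain K where K: "\<And>x r. x \<in> \<Omega> \<Longrightarrow> 1/8 < r \<Longrightarrow> r \<le> R1 \<Longrightarrow>
       emeasure \<nu> (qh_ball \<Omega> x (2 * r)) \<le> ennreal K * emeasure \<nu> (qh_ball \<Omega> x r)"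
      using part2[OF R1] by blast
    show "\<exists>C. doubling_upto (weighted_measure \<Omega> \<mu> \<alpha>) \<Omega> (qh_ball \<Omega>) R1 C"
      unfolding doubling_upto_def
    proof (intro exI[of _ "max c1 K"] ballI allI impI conjI)
      fix x r assume x: "x \<in> \<Omega>" and r: "0 < r \<and> r \<le> R1"
      show "0 < emeasure \<nu> (qh_ball \<Omega> x (2 * r))" using nu_pos[OF x] r by simp
      show "emeasure \<nu> (qh_ball \<Omega> x r) < \<infinity>" using nu_fin[OF x] r by simp
      have mono: "ennreal a * emeasure \<nu> (qh_ball \<Omega> x r) \<le> ennreal (max c1 K) * emeasure \<nu> (qh_ball \<Omega> x r)"
        if "a \<le> max c1 K" for a
        using that by (intro mult_right_mono ennreal_leI) auto
      show "emeasure \<nu> (qh_ball \<Omega> x (2 * r)) \<le> ennreal (max c1 K) * emeasure \<nu> (qh_ball \<Omega> x r)"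
      proof (cases "r \<le> 1/8")
        case True
        then show ?thesis using P1[OF x _ True] r mono[of c1] by (auto intro: order_trans)
      next
        case False
        then have "1/8 < r" by simp
        then have "emeasure \<nu> (qh_ball \<Omega> x (2 * r)) \<le> ennreal K * emeasure \<nu> (qh_ball \<Omega> x r)"
          using K[OF x] r by blast
        then show ?thesis using mono[of K] by simp
      qed
    qed
  qed
qed



end
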